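(* Let $n\ge4$. Then, as $S_n$-modules under conjugation and as algebras: (1) $\mathrm{EI}_n\cong\{n\}\oplus\{n-1,1\}$ is a matrix algebra (closed under matrix multiplication); (2) $\mathrm{DS}_n\cong\{n\}\oplus\{n-1,1\}\oplus\{n-2,2\}\oplus\{n-2,1^2\}$ is a matrix algebra; (3) $\mathrm{Symm}_n\cong\{n\}\oplus\{n-1,1\}\oplus\{n-2,2\}$ is a Jordan algebra but not a Lie algebra; (4) $\mathrm{Anti}_n\cong\{n-2,1^2\}$ is a Lie algebra but not a Jordan algebra; (5) the subspace sum $\mathrm{EI}_n+\mathrm{Symm}_n\cong\{n\}\oplus2\{n-1,1\}\oplus\{n-2,2\}$ is a Jordan algebra but not a Lie algebra.
   Context: Let $\mathbf{1}\in\mathbb{R}^n$ be the all-ones column vector and $\mathcal{L}_n=\{Q\in \mathrm{Mat}_n(\mathbb{R}): Q\mathbf{1}=0\}$. $R_i\in\mathcal{L}_n$ is the matrix whose off-diagonal entries in column $i$ are $1$, all other off-diagonal entries $0$, diagonal determined by zero row sums. $\mathrm{EI}_n:=\operatorname{span}_{\mathbb{R}}(R_1,\dots,R_n)$. $\mathrm{DS}_n:=\{Q\in\mathcal{L}_n:\mathbf{1}^TQ=0\}$ (zero row and column sums), which equals $\operatorname{span}_{\mathbb{R}}(K_\sigma-I_n:\sigma\in S_n)$. $\mathrm{Symm}_n$ and $\mathrm{Anti}_n$ are the symmetric and antisymmetric matrices in $\mathrm{DS}_n$ respectively (equivalently, symmetric resp. antisymmetric matrices in $\mathcal{L}_n$).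 For $\sigma\in S_n$, $K_\sigma$ is the permutation matrix with $e_iK_\sigma=e_{\sigma(i)}$; $S_n$ acts by $\sigma\cdot X=K_\sigma^TXK_\sigma$. $\{\lambda\}$ denotes the irreducible real $S_n$-module labelled by the partition $\lambda$. A subspace is a Jordan algebra if closed under $AB+BA$, a Lie algebra if closed under $AB-BA$. *)

theory Defs
  imports "HOL-Analysis.Analysis"
begin

definition onesv :: "real^'n" where
  "onesv = (\<chi> i. 1)"

definition Lmat :: "(real^'n^'n) set" where
  "Lmat = {Q. Q *v onesv = 0}"

text \<open>R_i: off-diagonal entries of column i are 1, other off-diagonal entries 0,
  diagonal chosen so that every row sum is zero.\<close>
definition Rmat :: "'n \<Rightarrow> real^'n^'n" where
  "Rmat i = (\<chi> a b. if a = b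
                     then - (\<Sum>c\<in>UNIV - {a}. if c = i then 1 else 0)
                     else (if b = i then 1 else 0))"

definition EI :: "(real^'n^'n) set" where
  "EI = span (range Rmat)"

definition DS :: "(real^'n^'n) set" where
  "DS = {Q \<in> Lmat. onesv v* Q = 0}"

definition Symm :: "(real^'n^'n) set" where
  "Symm = {Q \<in> DS. transpose Q = Q}"

definition Anti :: "(real^'n^'n) set" where
  "Anti = {Q \<in> DS. transpose Q = - Q}"

definition setsum_sp :: "(real^'n^'n) set \<Rightarrow> (real^'n^'n) set \<Rightarrow> (real^'n^'n) set" where
  "setsum_sp U W = {A + B | A B. A \<in> U \<and> B \<in> W}"

definition mat_algebra :: "(real^'n^'n) set \<Rightarrow> bool" where
  "mat_algebra V \<longleftrightarrow> (\<forall>A\<in>V. \<forall>B\<in>V. A ** B \<in> V)"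

definition jordan_alg :: "(real^'n^'n) set \<Rightarrow> bool" where
  "jordan_alg V \<longleftrightarrow> (\<forall>A\<in>V. \<forall>B\<in>V. A ** B + B ** A \<in> V)"

definition lie_alg :: "(real^'n^'n) set \<Rightarrow> bool" where
  "lie_alg V \<longleftrightarrow> (\<forall>A\<in>V. \<forall>B\<in>V. A ** B - B ** A \<in> V)"

text \<open>Permutation matrix with e_i K_sigma = e_(sigma i), i.e. row i is e_(sigma i).\<close>
definition Kperm :: "('n \<Rightarrow> 'n) \<Rightarrow> real^'n^'n" where
  "Kperm \<sigma> = (\<chi> i j. if j = \<sigma> i then 1 else 0)"

definition conj_act :: "('n \<Rightarrow> 'n) \<Rightarrow> real^'n^'n \<Rightarrow> real^'n^'n" where
  "conj_act \<sigma> X = transpose (Kperm \<sigma>) ** X ** Kperm \<sigma>"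

text \<open>A partition is a list of row lengths. Cells of the Young diagram: (row, column).\<close>
definition cells :: "nat list \<Rightarrow> (nat \<times> nat) set" where
  "cells lam = {(i, j). i < length lam \<and> j < lam ! i}"

definition tableaux :: "nat list \<Rightarrow> ('n \<Rightarrow> nat \<times> nat) set" where
  "tableaux lam = {t. bij_betw t UNIV (cells lam)}"

text \<open>A tabloid is represented by the row function (which row each entry lies in).\<close>
definition tabloid_of :: "('n \<Rightarrow> nat \<times> nat) \<Rightarrow> ('n \<Rightarrow> nat)" where
  "tabloid_of t = fst \<circ> t"

definition col_stab :: "('n \<Rightarrow> nat \<times> nat) \<Rightarrow> ('n \<Rightarrow> 'n) set" where
  "col_stab t = {\<pi>. \<pi> permutes UNIV \<and> (\<forall>x. snd (t (\<pi> x)) = snd (t x))}"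

text \<open>Polytabloid e_t = sum over column stabiliser of sign(pi) {pi t}, where the
  tableau pi t places pi(x) in the cell of x, i.e. pi t = t o inv pi.
  Elements of the permutation module M^lam are real functions on tabloids.\<close>
definition polytabloid :: "('n \<Rightarrow> nat \<times> nat) \<Rightarrow> (('n \<Rightarrow> nat) \<Rightarrow> real)" where
  "polytabloid t = (\<lambda>r. \<Sum>\<pi>\<in>col_stab t.
       if tabloid_of (t \<circ> inv \<pi>) = r then of_int (sign \<pi>) else 0)"

definition specht :: "nat list \<Rightarrow> (('n \<Rightarrow> nat) \<Rightarrow> real) set" where
  "specht lam = {v. \<exists>c. v = (\<lambda>r. \<Sum>t\<in>(tableaux lam :: ('n \<Rightarrow> nat \<times> nat) set). c t * polytabloid t r)}"

text \<open>Action on M^lam: (sigma f)(r) = f(sigma^-1 r), where sigma r = r o inv sigma.\<close>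
definition tab_act :: "('n \<Rightarrow> 'n) \<Rightarrow> (('n \<Rightarrow> nat) \<Rightarrow> real) \<Rightarrow> (('n \<Rightarrow> nat) \<Rightarrow> real)" where
  "tab_act \<sigma> f = (\<lambda>r. f (r \<circ> \<sigma>))"

definition spechtIso :: "(real^'n^'n) set \<Rightarrow> nat list \<Rightarrow> bool" where
  "spechtIso W lam \<longleftrightarrow>
     subspace W \<and>
     (\<forall>\<sigma>. \<sigma> permutes UNIV \<longrightarrow> (\<forall>X\<in>W. conj_act \<sigma> X \<in> W)) \<and>
     (\<exists>f. bij_betw f W (specht lam :: (('n \<Rightarrow> nat) \<Rightarrow> real) set) \<and>
          (\<forall>X\<in>W. \<forall>Y\<in>W. f (X + Y) = (\<lambda>r. f X r + f Y r)) \<and>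
          (\<forall>c. \<forall>X\<in>W. f (c *\<^sub>R X) = (\<lambda>r. c * f X r)) \<and>
          (\<forall>\<sigma>. \<sigma> permutes UNIV \<longrightarrow> (\<forall>X\<in>W. f (conj_act \<sigma> X) = tab_act \<sigma> (f X))))"

text \<open>V is isomorphic to the direct sum of the Specht modules in the list lams
  (with multiplicity): V is the internal direct sum of invariant subspaces W_i with
  W_i isomorphic to {lams ! i}.\<close>
definition isoDecomp :: "(real^'n^'n) set \<Rightarrow> nat list list \<Rightarrow> bool" where
  "isoDecomp V lams \<longleftrightarrow>
     subspace V \<and>
     (\<exists>Ws. length Ws = length lams \<and>
        (\<forall>i<length lams. spechtIso (Ws ! i) (lams ! i)) \<and>
        V = {\<Sum>i<length lams. vs i | vs. \<forall>i<length lams. vs i \<in> Ws ! i} \<and>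
        (\<forall>vs. (\<forall>i<length lams. vs i \<in> Ws ! i) \<and> (\<Sum>i<length lams. vs i) = 0
               \<longrightarrow> (\<forall>i<length lams. vs i = 0)))"

end

theory Submission
  imports Defs
begin


abbreviation sw :: "'a \<Rightarrow> 'a \<Rightarrow> 'a \<Rightarrow> 'a" where "sw \<equiv> Transposition.transpose"

lemma mmult_entry: "(A ** B) $ i $ j = (\<Sum>k\<in>UNIV. A $ i $ k * B $ k $ j)"
  by (simp add: matrix_matrix_mult_def)

lemma transpose_entry: "transpose A $ i $ j = A $ j $ i"
  by (simp add: transpose_def)

lemma Lmat_iff: "X \<in> Lmat \<longleftrightarrow> (\<forall>i. (\<Sum>j\<in>UNIV. X $ i $ j) = 0)"
  by (simp add: Lmat_def matrix_vector_mult_def onesv_def vec_eq_iff)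

lemma DS_iff: "X \<in> DS \<longleftrightarrow> (\<forall>i. (\<Sum>j\<in>UNIV. X $ i $ j) = 0) \<and> (\<forall>j. (\<Sum>i\<in>UNIV. X $ i $ j) = 0)"
  by (simp add: DS_def Lmat_iff vector_matrix_mult_def onesv_def vec_eq_iff)

lemma Symm_iff: "X \<in> Symm \<longleftrightarrow> (\<forall>i. (\<Sum>j\<in>UNIV. X $ i $ j) = 0) \<and> (\<forall>i j. X $ i $ j = X $ j $ i)"
proof
  assume "X \<in> Symm"
  then have d: "X \<in> DS" and t: "transpose X = X" by (auto simp: Symm_def)
  have "X $ i $ j = X $ j $ i" for i j
  proof -
    have "X $ i $ j = transpose X $ i $ j" by (simp only: t)
    then show ?thesis by (simp only: transpose_entry)
  qed
  with d show "(\<forall>i. (\<Sum>j\<in>UNIV. X $ i $ j) = 0) \<and> (\<forall>i j. X $ i $ j = X $ j $ i)"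
    unfolding DS_iff by blast
next
  assume a: "(\<forall>i. (\<Sum>j\<in>UNIV. X $ i $ j) = 0) \<and> (\<forall>i j. X $ i $ j = X $ j $ i)"
  have c: "(\<Sum>i\<in>UNIV. X $ i $ j) = 0" for j
  proof -
    have "(\<Sum>i\<in>UNIV. X $ i $ j) = (\<Sum>i\<in>UNIV. X $ j $ i)" using a by (intro sum.cong) auto
    also have "\<dots> = 0" using a by blast
    finally show ?thesis .
  qed
  have "transpose X = X" unfolding vec_eq_iff transpose_entry using a by blast
  with a c show "X \<in> Symm" by (simp add: Symm_def DS_iff)
qed

lemma Anti_iff: "X \<in> Anti \<longleftrightarrow> (\<forall>i. (\<Sum>j\<in>UNIV. X $ i $ j) = 0) \<and> (\<forall>i j. X $ i $ j = - X $ j $ i)"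
proof
  assume "X \<in> Anti"
  then have d: "X \<in> DS" and t: "transpose X = - X" by (auto simp: Anti_def)
  have "X $ i $ j = - X $ j $ i" for i j
  proof -
    have "X $ j $ i = - transpose X $ j $ i" by (simp add: t)
    then show ?thesis by (simp add: transpose_entry)
  qed
  with d show "(\<forall>i. (\<Sum>j\<in>UNIV. X $ i $ j) = 0) \<and> (\<forall>i j. X $ i $ j = - X $ j $ i)"
    unfolding DS_iff by blast
next
  assume a: "(\<forall>i. (\<Sum>j\<in>UNIV. X $ i $ j) = 0) \<and> (\<forall>i j. X $ i $ j = - X $ j $ i)"
  have c: "(\<Sum>i\<in>UNIV. X $ i $ j) = 0" for j
  proof -
    have "(\<Sum>i\<in>UNIV. X $ i $ j) = (\<Sum>i\<in>UNIV. - X $ j $ i)" using a by (intro sum.cong) blast+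
    also have "\<dots> = - (\<Sum>i\<in>UNIV. X $ j $ i)" by (simp add: sum_negf)
    also have "\<dots> = 0" using a[THEN conjunct1] by simp
    finally show ?thesis .
  qed
  have "transpose X = - X" unfolding vec_eq_iff transpose_entry vector_uminus_component using a by blast
  with a[THEN conjunct1] c show "X \<in> Anti" by (simp add: Anti_def DS_iff)
qed

lemma sum_perm_delta:
  fixes \<sigma> :: "'n::finite \<Rightarrow> 'n"
  assumes "\<sigma> permutes UNIV"
  shows "(\<Sum>l\<in>UNIV. (if i = \<sigma> l then 1 else 0) * (f l::real)) = f (inv \<sigma> i)"
proof -
  have "\<And>l. (i = \<sigma> l) = (l = inv \<sigma> i)"
    using assms by (metis permutes_inverses(1) permutes_inverses(2))
  then have "(\<Sum>l\<in>UNIV. (if i = \<sigma> l then 1 else 0) * (f l::real)) = (\<Sum>l\<in>UNIV. if l = inv \<sigma> i then f l else 0)"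
    by (intro sum.cong) auto
  also have "\<dots> = f (inv \<sigma> i)" by simp
  finally show ?thesis .
qed

lemma sum_perm_delta2:
  fixes \<sigma> :: "'n::finite \<Rightarrow> 'n"
  assumes "\<sigma> permutes UNIV"
  shows "(\<Sum>l\<in>UNIV. (f l::real) * (if i = \<sigma> l then 1 else 0)) = f (inv \<sigma> i)"
  using sum_perm_delta[OF assms, of i f] by (simp add: mult.commute)

lemma conj_entry:
  assumes "\<sigma> permutes UNIV"
  shows "conj_act \<sigma> X $ i $ j = X $ inv \<sigma> i $ inv \<sigma> j"
proof -
  have 1: "(transpose (Kperm \<sigma>) ** X) $ i $ k = X $ inv \<sigma> i $ k" for k
    unfolding mmult_entry transpose_entry Kperm_def vec_lambda_beta by (rule sum_perm_delta[OF assms])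
  have "conj_act \<sigma> X $ i $ j = (\<Sum>k\<in>UNIV. (transpose (Kperm \<sigma>) ** X) $ i $ k * Kperm \<sigma> $ k $ j)"
    unfolding conj_act_def by (rule mmult_entry)
  also have "\<dots> = (\<Sum>k\<in>UNIV. (transpose (Kperm \<sigma>) ** X) $ i $ k * (if j = \<sigma> k then 1 else 0))"
    by (simp only: Kperm_def vec_lambda_beta)
  also have "\<dots> = X $ inv \<sigma> i $ inv \<sigma> j"
    unfolding 1 by (rule sum_perm_delta2[OF assms])
  finally show ?thesis .
qed


lemma finite_cells: "finite (cells lam)"
proof -
  have "cells lam \<subseteq> Sigma {..<length lam} (\<lambda>i. {..<lam ! i})"
    by (auto simp: cells_def)
  then show ?thesis by (rule finite_subset) auto
qed

lemma finite_tableaux: "finite (tableaux lam :: ('n::finite \<Rightarrow> nat \<times> nat) set)"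
proof -
  have "tableaux lam \<subseteq> {f :: 'n \<Rightarrow> nat \<times> nat. \<forall>x. (x \<in> UNIV \<longrightarrow> f x \<in> cells lam) \<and> (x \<notin> UNIV \<longrightarrow> f x = undefined)}"
    by (auto simp: tableaux_def bij_betw_def)
  moreover have "finite {f :: 'n \<Rightarrow> nat \<times> nat. \<forall>x. (x \<in> UNIV \<longrightarrow> f x \<in> cells lam) \<and> (x \<notin> UNIV \<longrightarrow> f x = undefined)}"
    by (rule finite_set_of_finite_funs) (auto simp: finite_cells)
  ultimately show ?thesis by (rule finite_subset)
qed

lemma spechtIso_gen:
  fixes W :: "(real^'n::finite^'n) set" and f :: "real^'n^'n \<Rightarrow> ('n\<Rightarrow>nat) \<Rightarrow> real"
    and G :: "('n \<Rightarrow> nat \<times> nat) \<Rightarrow> real^'n^'n"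
  assumes sub: "subspace W"
  and inv: "\<And>\<sigma> X. \<sigma> permutes UNIV \<Longrightarrow> X \<in> W \<Longrightarrow> conj_act \<sigma> X \<in> W"
  and add: "\<And>X Y. f (X+Y) = (\<lambda>r. f X r + f Y r)" and scal: "\<And>c X. f (c *\<^sub>R X) = (\<lambda>r. c * f X r)"
  and inj: "\<And>X. X \<in> W \<Longrightarrow> f X = (\<lambda>r. 0) \<Longrightarrow> X = 0"
  and eqv: "\<And>\<sigma> X. \<sigma> permutes UNIV \<Longrightarrow> X \<in> W \<Longrightarrow> f (conj_act \<sigma> X) = tab_act \<sigma> (f X)"
  and GW: "\<And>t. t \<in> tableaux lam \<Longrightarrow> G t \<in> W"
  and Gf: "\<And>t. t \<in> tableaux lam \<Longrightarrow> f (G t) = polytabloid t"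
  and spn: "W \<subseteq> span (G ` tableaux lam)"
  shows "spechtIso W lam"
proof -
  let ?T = "tableaux lam :: ('n \<Rightarrow> nat\<times>nat) set"
  have fin: "finite ?T" by (rule finite_tableaux)
  have f0: "f 0 = (\<lambda>r. 0)"
  proof -
    have "f 0 = f (0 *\<^sub>R 0)" by simp
    also have "\<dots> = (\<lambda>r. 0 * f 0 r)" by (rule scal)
    also have "\<dots> = (\<lambda>r. 0)" by simp
    finally show ?thesis .
  qed
  have fsum: "f (\<Sum>t\<in>S. c t *\<^sub>R G t) = (\<lambda>r. \<Sum>t\<in>S. c t * f (G t) r)" if "finite S" for S c
    using that by induct (simp_all add: add scal f0)
  define F where "F = (\<lambda>c. \<Sum>t\<in>?T. c t *\<^sub>R G t)"
  let ?R = "range F"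
  have subR: "subspace ?R"
    unfolding subspace_def
  proof (intro conjI ballI allI)
    have "0 = F (\<lambda>t. 0)" by (simp add: F_def)
    then show "0 \<in> ?R" by (rule ssubst) (rule rangeI)
  next
    fix x y assume "x \<in> ?R" "y \<in> ?R"
    then obtain c d where "x = F c" "y = F d" by blast
    then have "x + y = F (\<lambda>t. c t + d t)"
      by (simp add: F_def scaleR_add_left sum.distrib)
    then show "x + y \<in> ?R" by (rule ssubst) (rule rangeI)
  next
    fix a :: real and x assume "x \<in> ?R"
    then obtain c where "x = F c" by blast
    then have "a *\<^sub>R x = F (\<lambda>t. a * c t)"
      by (simp add: F_def scaleR_sum_right)
    then show "a *\<^sub>R x \<in> ?R" by (rule ssubst) (rule rangeI)
  qed
  have GR: "G ` ?T \<subseteq> ?R"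
  proof
    fix x assume "x \<in> G ` ?T"
    then obtain t0 where t0: "t0 \<in> ?T" "x = G t0" by blast
    have "(\<Sum>t\<in>?T. (if t = t0 then 1 else 0) *\<^sub>R G t) = (\<Sum>t\<in>?T. if t = t0 then G t else 0)"
      by (rule sum.cong) auto
    also have "\<dots> = G t0" using t0 fin by simp
    finally have "x = F (\<lambda>t. if t = t0 then 1 else 0)" using t0 by (simp add: F_def)
    then show "x \<in> ?R" by (rule ssubst) (rule rangeI)
  qed
  have rep: "\<exists>c. X = (\<Sum>t\<in>?T. c t *\<^sub>R G t)" if "X \<in> W" for X
  proof -
    have "X \<in> ?R" using spn span_minimal[OF GR subR] that by blast
    then show ?thesis by (auto simp: F_def)
  qed
  have img: "f ` W = specht lam"
  proof
    show "f ` W \<subseteq> specht lam"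
    proof
      fix v :: "('n \<Rightarrow> nat) \<Rightarrow> real" assume "v \<in> f ` W"
      then obtain X where X: "X \<in> W" "v = f X" by blast
      obtain c where c: "X = (\<Sum>t\<in>?T. c t *\<^sub>R G t)" using rep[OF X(1)] by blast
      have "v = (\<lambda>r. \<Sum>t\<in>?T. c t * f (G t) r)" using X c fsum fin by simp
      also have "\<dots> = (\<lambda>r. \<Sum>t\<in>?T. c t * polytabloid t r)"
        using Gf by (intro ext sum.cong) auto
      finally show "v \<in> specht lam" unfolding specht_def by blast
    qed
  next
    show "specht lam \<subseteq> f ` W"
    proof
      fix v :: "('n \<Rightarrow> nat) \<Rightarrow> real" assume "v \<in> specht lam"
      then obtain c where c: "v = (\<lambda>r. \<Sum>t\<in>?T. c t * polytabloid t r)" unfolding specht_def by blast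
      have "f (\<Sum>t\<in>?T. c t *\<^sub>R G t) = (\<lambda>r. \<Sum>t\<in>?T. c t * f (G t) r)" using fsum fin by simp
      also have "\<dots> = v"
        unfolding c using Gf by (intro ext sum.cong) auto
      finally have "v = f (\<Sum>t\<in>?T. c t *\<^sub>R G t)" by simp
      moreover have "(\<Sum>t\<in>?T. c t *\<^sub>R G t) \<in> W"
        by (rule subspace_sum[OF sub]) (intro subspace_scale[OF sub] GW; simp)
      ultimately show "v \<in> f ` W" by blast
    qed
  qed
  have injW: "inj_on f W"
  proof (rule inj_onI)
    fix X Y :: "real^'n^'n" assume XY: "X \<in> W" "Y \<in> W" "f X = f Y"
    have "f (X + (-1) *\<^sub>R Y) = (\<lambda>r. f X r + (-1) * f Y r)" by (simp only: add scal)
    also have "\<dots> = (\<lambda>r. 0)" using XY by simp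
    finally have "X + (-1) *\<^sub>R Y = 0"
      using inj subspace_add[OF sub XY(1) subspace_scale[OF sub XY(2)]] by blast
    then show "X = Y" by (simp add: algebra_simps)
  qed
  have bij: "bij_betw f W (specht lam)" using injW img by (simp add: bij_betw_def)
  show ?thesis unfolding spechtIso_def
  proof (intro conjI)
    show "subspace W" by (rule sub)
    show "\<forall>\<sigma>. \<sigma> permutes UNIV \<longrightarrow> (\<forall>X\<in>W. conj_act \<sigma> X \<in> W)" using inv by blast
    show "\<exists>f. bij_betw f W (specht lam :: (('n \<Rightarrow> nat) \<Rightarrow> real) set) \<and>
          (\<forall>X\<in>W. \<forall>Y\<in>W. f (X + Y) = (\<lambda>r. f X r + f Y r)) \<and>
          (\<forall>c. \<forall>X\<in>W. f (c *\<^sub>R X) = (\<lambda>r. c * f X r)) \<and>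
          (\<forall>\<sigma>. \<sigma> permutes UNIV \<longrightarrow> (\<forall>X\<in>W. f (conj_act \<sigma> X) = tab_act \<sigma> (f X)))"
      apply (rule exI[of _ f])
      using bij add scal eqv by blast
  qed
qed


lemma cells1: "(p \<in> cells [a]) \<longleftrightarrow> fst p = 0 \<and> snd p < a"
  by (cases p) (auto simp: cells_def)

lemma cells2: "(p \<in> cells [a, b]) \<longleftrightarrow> (fst p = 0 \<and> snd p < a) \<or> (fst p = 1 \<and> snd p < b)"
  by (cases p) (auto simp: cells_def less_Suc_eq nth_Cons split: nat.splits)

lemma cells3: "(p \<in> cells [a, b, c]) \<longleftrightarrow> (fst p = 0 \<and> snd p < a) \<or> (fst p = 1 \<and> snd p < b) \<or> (fst p = 2 \<and> snd p < c)"
  by (cases p) (auto simp: cells_def less_Suc_eq nth_Cons numeral_2_eq_2 split: nat.splits)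

lemma card_cells1: "card (cells [a]) = a"
proof -
  have "cells [a] = {0} \<times> {..<a}" by (auto simp: cells1)
  then show ?thesis by (simp add: card_cartesian_product)
qed

lemma card_cells2: "card (cells [a, b]) = a + b"
proof -
  have e: "cells [a, b] = {0} \<times> {..<a} \<union> {1} \<times> {..<b}" by (auto simp: cells2)
  show ?thesis unfolding e by (subst card_Un_disjoint) (auto simp: card_cartesian_product)
qed

lemma card_cells3: "card (cells [a, b, c]) = a + b + c"
proof -
  have e: "cells [a, b, c] = ({0} \<times> {..<a} \<union> {1} \<times> {..<b}) \<union> {2} \<times> {..<c}" by (auto simp: cells3)
  show ?thesis unfolding e
    by (subst card_Un_disjoint, simp, simp, force, subst card_Un_disjoint) (auto simp: card_cartesian_product)
qed

lemma tabD:
  assumes "t \<in> tableaux lam"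
  shows "bij_betw t UNIV (cells lam)" "inj t" "t x \<in> cells lam" 
  using assms by (auto simp: tableaux_def bij_betw_def)

lemma tab_inv:
  assumes "t \<in> tableaux lam" "c \<in> cells lam"
  shows "t (inv t c) = c"
  using assms by (metis bij_betw_inv_into_right tableaux_def mem_Collect_eq)

lemma tab_eq_iff:
  assumes "t \<in> tableaux lam" "c \<in> cells lam"
  shows "t x = c \<longleftrightarrow> x = inv t c"
  using assms tab_inv[OF assms] tabD(2)[OF assms(1)] by (metis injD)

lemma exists_perm_map:
  fixes xs ys :: "'a list"
  assumes "distinct xs" "distinct ys" "length xs = length ys"
  shows "\<exists>\<pi>. \<pi> permutes UNIV \<and> map \<pi> xs = ys"
  using assms
proof (induction xs arbitrary: ys)
  case Nil
  have "(\<lambda>x. x) permutes (UNIV::'a set)" using permutes_id unfolding id_def .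
  with Nil show ?case by auto
next
  case (Cons x xs)
  then obtain y ys' where ys: "ys = y # ys'" by (cases ys) auto
  with Cons.prems have d: "distinct xs" "distinct ys'" "length xs = length ys'" "x \<notin> set xs" "y \<notin> set ys'" by auto
  obtain \<pi> where \<pi>: "\<pi> permutes UNIV" "map \<pi> xs = ys'" using Cons.IH[OF d(1-3)] by blast
  let ?z = "\<pi> x"
  have zn: "?z \<notin> set ys'"
  proof
    assume "?z \<in> set ys'"
    then have "?z \<in> \<pi> ` set xs" using \<pi>(2) by (metis set_map)
    then obtain w where "w \<in> set xs" "\<pi> w = \<pi> x" by auto
    then show False using d(4) \<pi>(1) by (metis permutes_inj injD)
  qed
  have "map (sw ?z y \<circ> \<pi>) xs = map (sw ?z y) ys'" using \<pi>(2) by (metis map_map)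
  also have "\<dots> = ys'"
    using zn d(5) by (intro map_idI) (auto simp: Transposition.transpose_def)
  finally have "map (sw ?z y \<circ> \<pi>) (x # xs) = ys" using ys by (simp add: Transposition.transpose_def)
  moreover have "(sw ?z y \<circ> \<pi>) permutes UNIV"
    using \<pi>(1) by (simp add: permutes_compose permutes_swap_id)
  ultimately show ?case by blast
qed

lemma exists_tableau:
  fixes xs :: "'n::finite list"
  assumes "CARD('n) = card (cells lam)" "distinct xs" "distinct cs" "length xs = length cs" "set cs \<subseteq> cells lam"
  shows "\<exists>t \<in> (tableaux lam :: ('n \<Rightarrow> nat \<times> nat) set). map t xs = cs"
proof -
  obtain t0 :: "'n \<Rightarrow> nat \<times> nat" where t0: "bij_betw t0 UNIV (cells lam)"
    using finite_same_card_bij[of "UNIV :: 'n set" "cells lam"] assms(1) finite_cells by auto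
  then have t0t: "t0 \<in> tableaux lam" by (simp add: tableaux_def)
  have "inj_on (inv t0) (cells lam)"
    using t0 by (metis bij_betw_imp_inj_on bij_betw_inv_into)
  then have "distinct (map (inv t0) cs)" using assms(3,5) by (simp add: distinct_map inj_on_subset)
  then obtain \<pi> where \<pi>: "\<pi> permutes UNIV" "map \<pi> xs = map (inv t0) cs"
    using exists_perm_map[OF assms(2)] assms(4) by fastforce
  have "bij_betw (t0 \<circ> \<pi>) UNIV (cells lam)"
    using \<pi>(1) t0 by (metis bij_betw_comp_iff permutes_imp_bij)
  then have "t0 \<circ> \<pi> \<in> tableaux lam" by (simp add: tableaux_def)
  moreover have "map (t0 \<circ> \<pi>) xs = cs"
  proof -
    have "map (t0 \<circ> \<pi>) xs = map t0 (map (inv t0) cs)" using \<pi>(2) by (metis map_map)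
    also have "\<dots> = cs" using assms(5) tab_inv[OF t0t] by (induct cs) auto
    finally show ?thesis .
  qed
  ultimately show ?thesis by blast
qed

lemma col_stabD:
  assumes "\<pi> \<in> col_stab t"
  shows "\<pi> permutes UNIV" "snd (t (\<pi> x)) = snd (t x)"
  using assms by (auto simp: col_stab_def)

lemma id_col_stab: "id \<in> col_stab t"
  by (simp add: col_stab_def permutes_id)


definition Jn :: "real^'n::finite^'n" where
  "Jn = (\<chi> i j. if i = j then 1 - real CARD('n) else 1)"

definition Wn :: "(real^'n::finite^'n) set" where
  "Wn = range (\<lambda>c. c *\<^sub>R Jn)"

definition fn0 :: "real^'n::finite^'n \<Rightarrow> ('n \<Rightarrow> nat) \<Rightarrow> real" where
  "fn0 X r = (if r = (\<lambda>x. 0) then (\<Sum>i\<in>UNIV. X $ i $ i) / (real CARD('n) - real CARD('n) * real CARD('n)) else 0)"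

lemma col_stab_n:
  assumes "t \<in> tableaux [CARD('n::finite)]"
  shows "col_stab (t :: 'n \<Rightarrow> nat \<times> nat) = {id}"
proof
  show "{id} \<subseteq> col_stab t" using id_col_stab by auto
  show "col_stab t \<subseteq> {id}"
  proof
    fix \<pi> assume p: "\<pi> \<in> col_stab t"
    have "\<pi> x = x" for x
    proof -
      have "t (\<pi> x) = t x"
        using tabD(3)[OF assms, of "\<pi> x"] tabD(3)[OF assms, of x] col_stabD(2)[OF p, of x]
        by (simp add: cells1 prod_eq_iff)
      then show ?thesis using tabD(2)[OF assms] by (simp add: inj_eq)
    qed
    then show "\<pi> \<in> {id}" by (auto simp: fun_eq_iff)
  qed
qed

lemma polytab_n:
  assumes "t \<in> tableaux [CARD('n::finite)]"
  shows "polytabloid (t :: 'n \<Rightarrow> nat \<times> nat) = (\<lambda>r. if r = (\<lambda>x. 0) then 1 else 0)"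
proof -
  have "tabloid_of t = (\<lambda>x. 0)"
    using tabD(3)[OF assms] by (auto simp: tabloid_of_def cells1 fun_eq_iff)
  then show ?thesis
    unfolding polytabloid_def col_stab_n[OF assms] by (auto simp: fun_eq_iff)
qed

lemma card_ge2: "CARD('n::finite) \<ge> 4 \<Longrightarrow> real CARD('n) - real CARD('n) * real CARD('n) \<noteq> 0"
proof -
  assume a: "CARD('n) \<ge> 4"
  have "real CARD('n) * real CARD('n) \<ge> 4 * real CARD('n)" using a by (intro mult_right_mono) auto
  then show ?thesis using a by linarith
qed


lemma specht_n:
  assumes n4: "CARD('n::finite) \<ge> 4"
  shows "spechtIso (Wn :: (real^'n^'n) set) [CARD('n)]"
proof (rule spechtIso_gen[where f = fn0 and G = "\<lambda>t. Jn"])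
  let ?N = "real CARD('n)"
  have nz: "?N - ?N * ?N \<noteq> 0" by (rule card_ge2[OF n4])
  show "subspace (Wn :: (real^'n^'n) set)"
    unfolding subspace_def Wn_def
  proof (intro conjI ballI allI)
    show "(0::real^'n^'n) \<in> range (\<lambda>c. c *\<^sub>R Jn)" by (rule image_eqI[of _ _ 0]) auto
    fix x y :: "real^'n^'n" assume "x \<in> range (\<lambda>c. c *\<^sub>R Jn)" "y \<in> range (\<lambda>c. c *\<^sub>R Jn)"
    then obtain a b where "x = a *\<^sub>R Jn" "y = b *\<^sub>R Jn" by blast
    then show "x + y \<in> range (\<lambda>c. c *\<^sub>R Jn)" by (intro image_eqI[of _ _ "a + b"]) (auto simp: scaleR_add_left)
  next
    fix c :: real and x :: "real^'n^'n" assume "x \<in> range (\<lambda>c. c *\<^sub>R Jn)"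
    then obtain a where "x = a *\<^sub>R Jn" by blast
    then show "c *\<^sub>R x \<in> range (\<lambda>c. c *\<^sub>R Jn)" by (intro image_eqI[of _ _ "c * a"]) auto
  qed
  have conjJ: "conj_act \<sigma> Jn = Jn" if "\<sigma> permutes UNIV" for \<sigma> :: "'n \<Rightarrow> 'n"
  proof -
    have "(inv \<sigma> i = inv \<sigma> j) = (i = j)" for i j
      using that by (metis permutes_inverses(1))
    then show ?thesis by (simp add: vec_eq_iff conj_entry[OF that] Jn_def)
  qed
  have conjS: "conj_act \<sigma> (c *\<^sub>R X) = c *\<^sub>R conj_act \<sigma> X" if "\<sigma> permutes UNIV" for \<sigma> :: "'n \<Rightarrow> 'n" and c and X :: "real^'n^'n"
    by (simp add: vec_eq_iff conj_entry[OF that])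
  show "conj_act \<sigma> X \<in> Wn" if "\<sigma> permutes UNIV" "X \<in> Wn" for \<sigma> :: "'n \<Rightarrow> 'n" and X :: "real^'n^'n"
    using that conjJ conjS unfolding Wn_def by auto
  show "fn0 (X + Y) = (\<lambda>r. fn0 X r + fn0 Y r)" for X Y :: "real^'n^'n"
    by (auto simp: fn0_def fun_eq_iff sum.distrib add_divide_distrib)
  show "fn0 (c *\<^sub>R X) = (\<lambda>r. c * fn0 X r)" for c and X :: "real^'n^'n"
    by (auto simp: fn0_def fun_eq_iff sum_distrib_left)
  have trJ: "(\<Sum>i\<in>UNIV. (Jn::real^'n^'n) $ i $ i) = ?N - ?N * ?N"
    by (simp add: Jn_def algebra_simps)
  show "X = 0" if a: "X \<in> Wn" "fn0 X = (\<lambda>r. 0)" for X :: "real^'n^'n"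
  proof -
    obtain c where c: "X = c *\<^sub>R Jn" using a(1) unfolding Wn_def by blast
    have "fn0 X (\<lambda>x. 0) = c" using nz unfolding c fn0_def by (simp add: trJ sum_distrib_left[symmetric])
    then have "c = 0" using a(2) by (metis)
    then show ?thesis using c by simp
  qed
  show "fn0 (conj_act \<sigma> X) = tab_act \<sigma> (fn0 X)" if "\<sigma> permutes UNIV" "X \<in> Wn" for \<sigma> :: "'n \<Rightarrow> 'n" and X :: "real^'n^'n"
  proof -
    have tr: "(\<Sum>i\<in>UNIV. conj_act \<sigma> X $ i $ i) = (\<Sum>i\<in>UNIV. X $ i $ i)"
      unfolding conj_entry[OF that(1)]
      using sum.permute[OF permutes_inv[OF that(1)], of "\<lambda>i. X $ i $ i"] by (simp add: comp_def)
    have rr: "(r \<circ> \<sigma> = (\<lambda>x. 0)) = (r = (\<lambda>x. 0))" for r :: "'n \<Rightarrow> nat"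
    proof
      assume h: "r \<circ> \<sigma> = (\<lambda>x. 0)"
      show "r = (\<lambda>x. 0)"
      proof
        fix x
        have "r x = (r \<circ> \<sigma>) (inv \<sigma> x)" using permutes_inverses(1)[OF that(1)] by simp
        then show "r x = 0" using h by simp
      qed
    qed simp
    show ?thesis by (rule ext) (simp add: tab_act_def fn0_def tr rr)
  qed
  show "Jn \<in> Wn" unfolding Wn_def by (rule image_eqI[of _ _ 1]) auto
  show "fn0 Jn = polytabloid t" if "t \<in> tableaux [CARD('n)]" for t :: "'n \<Rightarrow> nat \<times> nat"
    using nz by (simp add: polytab_n[OF that] fn0_def trJ fun_eq_iff)
  obtain t0 where "t0 \<in> (tableaux [CARD('n)] :: ('n \<Rightarrow> nat \<times> nat) set)"
    using exists_tableau[of "[CARD('n)]" "[]" "[]"] by (auto simp: card_cells1)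
  then have e: "(\<lambda>t. Jn) ` (tableaux [CARD('n)] :: ('n \<Rightarrow> nat \<times> nat) set) = {Jn :: real^'n^'n}" by auto
  have "(Wn :: (real^'n^'n) set) \<subseteq> span {Jn}"
    unfolding Wn_def
  proof
    fix x :: "real^'n^'n" assume "x \<in> range (\<lambda>c. c *\<^sub>R Jn)"
    then obtain c where "x = c *\<^sub>R Jn" by blast
    then show "x \<in> span {Jn}" by (simp add: span_scale span_base)
  qed
  then show "(Wn :: (real^'n^'n) set) \<subseteq> span ((\<lambda>t. Jn) ` (tableaux [CARD('n)] :: ('n \<Rightarrow> nat \<times> nat) set))"
    using e by (simp only:)
qed


definition d1 :: "'n \<Rightarrow> 'n \<Rightarrow> nat" where
  "d1 x = (\<lambda>z. if z = x then 1 else 0)"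

lemma d1_inj: "d1 x = d1 y \<longleftrightarrow> x = y"
  by (auto simp: d1_def fun_eq_iff split: if_splits)

lemma comp_perm_eq:
  assumes "\<sigma> permutes UNIV"
  shows "(r \<circ> \<sigma> = g) \<longleftrightarrow> (r = g \<circ> inv \<sigma>)"
proof
  assume "r \<circ> \<sigma> = g"
  then have "r \<circ> \<sigma> \<circ> inv \<sigma> = g \<circ> inv \<sigma>" by simp
  then show "r = g \<circ> inv \<sigma>" using permutes_inv_o(1)[OF assms] by (simp add: o_assoc[symmetric])
next
  assume "r = g \<circ> inv \<sigma>"
  then show "r \<circ> \<sigma> = g" using permutes_inv_o(2)[OF assms] by (metis comp_id o_assoc)
qed

lemma sum_if_delta: "(\<Sum>x\<in>(UNIV::'n::finite set). if P x then (if x = a then (c::real) else 0) else 0) = (if P a then c else 0)"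
proof -
  have "(\<Sum>x\<in>(UNIV::'n set). if P x then (if x = a then (c::real) else 0) else 0) = (\<Sum>x\<in>UNIV. if x = a then (if P a then c else 0) else 0)"
    by (rule sum.cong) auto
  then show ?thesis by simp
qed

lemma cells_n1:
  "p \<in> cells [m, 1] \<longleftrightarrow> (fst p = 0 \<and> snd p < m) \<or> p = (1, 0)"
  by (cases p) (auto simp: cells2)

locale tab_n1 =
  fixes t :: "'n::finite \<Rightarrow> nat \<times> nat"
  assumes tt: "t \<in> tableaux [CARD('n) - 1, 1]"
  and n2: "CARD('n) \<ge> 2"
begin

definition "a = inv t (1, 0)"
definition "b = inv t (0, 0)"

lemma c10: "(1,0) \<in> cells [CARD('n) - 1, 1]" by (simp add: cells2)
lemma c00: "(0,0) \<in> cells [CARD('n) - 1, 1]" using n2 by (simp add: cells2)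

lemma ta: "t a = (1, 0)" unfolding a_def by (rule tab_inv[OF tt c10])
lemma tb: "t b = (0, 0)" unfolding b_def by (rule tab_inv[OF tt c00])
lemma ab: "a \<noteq> b" using ta tb by auto

lemma t_eq: "t x = t y \<longleftrightarrow> x = y" using tabD(2)[OF tt] by (auto simp: inj_eq)

lemma cell: "(fst (t x) = 0 \<and> snd (t x) < CARD('n) - 1) \<or> t x = (1, 0)"
  using tabD(3)[OF tt, of x] by (simp only: cells_n1)

lemma tabloid: "tabloid_of t = d1 a"
proof
  fix z
  show "tabloid_of t z = d1 a z"
  proof (cases "z = a")
    case True then show ?thesis by (simp add: tabloid_of_def d1_def ta)
  next
    case False
    then have "t z \<noteq> (1, 0)" using ta t_eq by metis
    then show ?thesis using cell[of z] False by (auto simp: tabloid_of_def d1_def)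
  qed
qed

lemma col_stab_eq: "col_stab t = {id, sw a b}"
proof
  show "{id, sw a b} \<subseteq> col_stab t"
  proof -
    have "snd (t (sw a b x)) = snd (t x)" for x
      by (cases "x = a"; cases "x = b") (auto simp: ta tb)
    then have "sw a b \<in> col_stab t" by (simp add: col_stab_def permutes_swap_id)
    then show ?thesis using id_col_stab by auto
  qed
  show "col_stab t \<subseteq> {id, sw a b}"
  proof
    fix \<pi> assume p: "\<pi> \<in> col_stab t"
    have fix_other: "\<pi> z = z" if "z \<noteq> a" "z \<noteq> b" for z
    proof -
      have "t z \<noteq> (1,0)" "t z \<noteq> (0,0)" using that ta tb t_eq by metis+
      then have "fst (t z) = 0" "snd (t z) \<noteq> 0" using cell[of z] by (auto simp: prod_eq_iff)
      moreover have "snd (t (\<pi> z)) = snd (t z)" by (rule col_stabD(2)[OF p])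
      ultimately have "t (\<pi> z) = t z" using cell[of "\<pi> z"] by (auto simp: prod_eq_iff)
      then show ?thesis by (simp add: t_eq)
    qed
    have inab: "\<pi> z \<in> {a, b}" if "z = a \<or> z = b" for z
    proof -
      have "snd (t (\<pi> z)) = 0" using col_stabD(2)[OF p, of z] that ta tb by auto
      then have "t (\<pi> z) = (1,0) \<or> t (\<pi> z) = (0,0)" using cell[of "\<pi> z"] by (auto simp: prod_eq_iff)
      then have "t (\<pi> z) = t a \<or> t (\<pi> z) = t b" by (simp only: ta tb)
      then show ?thesis by (auto simp only: t_eq)
    qed
    have injp: "inj \<pi>" using col_stabD(1)[OF p] by (rule permutes_inj)
    have pba: "\<pi> b \<noteq> \<pi> a" using injp ab by (metis injD)
    show "\<pi> \<in> {id, sw a b}"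
    proof (cases "\<pi> a = a")
      case True
      then have pb: "\<pi> b = b" using inab[of b] pba by auto
      have "\<pi> x = x" for x using True pb fix_other[of x] by (cases "x = a"; cases "x = b") auto
      then have "\<pi> = id" by (auto simp: fun_eq_iff)
      then show ?thesis by simp
    next
      case False
      then have pa: "\<pi> a = b" using inab[of a] by auto
      then have "\<pi> b = a" using inab[of b] pba by auto
      then have "\<pi> = sw a b" using pa fix_other
        by (auto simp: fun_eq_iff Transposition.transpose_def)
      then show ?thesis by simp
    qed
  qed
qed

lemma polytab: "polytabloid t = (\<lambda>r. (if r = d1 a then 1 else 0) - (if r = d1 b then 1 else 0))"
proof -
  have idsw: "id \<noteq> sw a b" using ab by (metis id_apply transpose_apply_first)
  have t2: "tabloid_of (t \<circ> sw a b) = d1 b"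
  proof
    fix z
    have "tabloid_of (t \<circ> sw a b) z = tabloid_of t (sw a b z)" by (simp add: tabloid_of_def)
    also have "\<dots> = d1 b z" unfolding tabloid
      using ab by (auto simp: d1_def Transposition.transpose_def)
    finally show "tabloid_of (t \<circ> sw a b) z = d1 b z" .
  qed
  show ?thesis
    unfolding polytabloid_def col_stab_eq using idsw ab
    by (auto simp: fun_eq_iff tabloid t2 inv_transpose_eq sign_swap_id)
qed

end


lemma d1_comp_inv:
  assumes "\<sigma> permutes UNIV"
  shows "d1 (inv \<sigma> y) \<circ> inv \<sigma> = d1 y"
proof
  fix z
  have "(inv \<sigma> z = inv \<sigma> y) = (z = y)" using assms by (metis permutes_inverses(1))
  then show "(d1 (inv \<sigma> y) \<circ> inv \<sigma>) z = d1 y z" by (simp add: d1_def)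
qed

lemma sum_mult_delta1: "(\<Sum>x\<in>(UNIV::'n::finite set). f x * (if i = x then 1 else 0)) = (f i::real)"
proof -
  have "(\<Sum>x\<in>(UNIV::'n set). f x * (if i = x then 1 else 0)) = (\<Sum>x\<in>UNIV. if x = i then f x else 0)"
    by (rule sum.cong) auto
  then show ?thesis by simp
qed

lemma sum_mult_delta2: "(\<Sum>x\<in>(UNIV::'n::finite set). f x * (if x = i then 1 else 0)) = (f i::real)"
proof -
  have "(\<Sum>x\<in>(UNIV::'n set). f x * (if x = i then 1 else 0)) = (\<Sum>x\<in>UNIV. if x = i then f x else 0)"
    by (rule sum.cong) auto
  then show ?thesis by simp
qed

lemma memW: "X = M u \<Longrightarrow> P u \<Longrightarrow> X \<in> {M u | u. P u}" by blast

lemma specht_n1: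
  fixes M :: "('n::finite \<Rightarrow> real) \<Rightarrow> real^'n^'n" and phi :: "real^'n^'n \<Rightarrow> 'n \<Rightarrow> real"
  assumes n2: "CARD('n) \<ge> 2"
  and Madd: "\<And>u v. M (\<lambda>i. u i + v i) = M u + M v"
  and Mscal: "\<And>c u. M (\<lambda>i. c * u i) = c *\<^sub>R M u"
  and phiadd: "\<And>X Y. phi (X + Y) = (\<lambda>i. phi X i + phi Y i)"
  and phiscal: "\<And>c X. phi (c *\<^sub>R X) = (\<lambda>i. c * phi X i)"
  and phiM: "\<And>u. sum u UNIV = 0 \<Longrightarrow> phi (M u) = u"
  and Mconj: "\<And>\<sigma> u. \<sigma> permutes UNIV \<Longrightarrow> conj_act \<sigma> (M u) = M (u \<circ> inv \<sigma>)"
  shows "spechtIso {M u | u. sum u UNIV = 0} [CARD('n) - 1, 1]"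
proof -
  let ?W = "{M u | u. sum u UNIV = 0}"
  have M0: "M (\<lambda>i. 0) = 0" using Mscal[of 0 "\<lambda>i. 0"] by simp
  have Msum: "M (\<lambda>i. \<Sum>x\<in>S. c x * v x i) = (\<Sum>x\<in>S. c x *\<^sub>R M (v x))" if "finite S" for S c v
    using that
  proof induct
    case empty then show ?case using M0 by simp
  next
    case (insert y F)
    have "M (\<lambda>i. \<Sum>x\<in>insert y F. c x * v x i) = M (\<lambda>i. c y * v y i + (\<Sum>x\<in>F. c x * v x i))"
      using insert by simp
    also have "\<dots> = c y *\<^sub>R M (v y) + M (\<lambda>i. \<Sum>x\<in>F. c x * v x i)"
      using Madd[of "\<lambda>i. c y * v y i"] Mscal by simp
    finally show ?case using insert by simp
  qed
  define f :: "real^'n^'n \<Rightarrow> ('n \<Rightarrow> nat) \<Rightarrow> real" where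
    "f X = (\<lambda>r. \<Sum>x\<in>UNIV. if r = d1 x then phi X x else 0)" for X
  define G :: "('n \<Rightarrow> nat \<times> nat) \<Rightarrow> real^'n^'n" where
    "G t = M (\<lambda>x. (if x = tab_n1.a t then 1 else 0) - (if x = tab_n1.b t then 1 else 0))" for t
  have fat: "f (M u) (d1 a) = u a" if "sum u UNIV = 0" for u a
    unfolding f_def phiM[OF that] d1_inj by simp
  show ?thesis
  proof (rule spechtIso_gen[where f = f and G = G])
    show "subspace ?W"
      unfolding subspace_def
    proof (intro conjI ballI allI)
      show "0 \<in> ?W" using M0 by force
      fix x y assume "x \<in> ?W" "y \<in> ?W"
      then obtain u v where "x = M u" "y = M v" "sum u UNIV = 0" "sum v UNIV = 0" by blast
      then show "x + y \<in> ?W" using Madd[of u v] by (intro memW[of _ M "\<lambda>i. u i + v i"]) (simp_all add: sum.distrib)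
    next
      fix c :: real and x assume "x \<in> ?W"
      then obtain u where "x = M u" "sum u UNIV = 0" by blast
      then show "c *\<^sub>R x \<in> ?W" using Mscal[of c u] by (intro memW[of _ M "\<lambda>i. c * u i"]) (simp_all add: sum_distrib_left[symmetric])
    qed
    have sperm: "sum (u \<circ> inv \<sigma>) UNIV = sum u UNIV" if "\<sigma> permutes UNIV" for \<sigma> :: "'n \<Rightarrow> 'n" and u :: "'n \<Rightarrow> real"
      using sum.permute[OF permutes_inv[OF that], of u] by simp
    show "conj_act \<sigma> X \<in> ?W" if "\<sigma> permutes UNIV" "X \<in> ?W" for \<sigma> X
      using that Mconj sperm by force
    show "f (X + Y) = (\<lambda>r. f X r + f Y r)" for X Y
      by (auto simp: f_def fun_eq_iff phiadd sum.distrib[symmetric] intro!: sum.cong)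
    show "f (c *\<^sub>R X) = (\<lambda>r. c * f X r)" for c X
      by (auto simp: f_def fun_eq_iff phiscal sum_distrib_left intro!: sum.cong)
    show "X = 0" if a: "X \<in> ?W" "f X = (\<lambda>r. 0)" for X
    proof -
      obtain u where u: "X = M u" "sum u UNIV = 0" using a(1) by blast
      have "u a = 0" for a using fat[OF u(2), of a] a(2) u(1) by simp
      then have "u = (\<lambda>i. 0)" by auto
      then show ?thesis using u M0 by simp
    qed
    show "f (conj_act \<sigma> X) = tab_act \<sigma> (f X)" if s: "\<sigma> permutes UNIV" and xw: "X \<in> ?W" for \<sigma> X
    proof -
      obtain u where u: "X = M u" "sum u UNIV = 0" using xw by blast
      have s0: "sum (u \<circ> inv \<sigma>) UNIV = 0" using sperm[OF s] u(2) by simp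
      show ?thesis
      proof
        fix r
        have "f (conj_act \<sigma> X) r = (\<Sum>y\<in>UNIV. if r = d1 y then u (inv \<sigma> y) else 0)"
          unfolding u Mconj[OF s] f_def phiM[OF s0] by (rule sum.cong) (simp_all add: comp_def)
        also have "\<dots> = (\<Sum>y\<in>UNIV. if r \<circ> \<sigma> = d1 (inv \<sigma> y) then u (inv \<sigma> y) else 0)"
          by (rule sum.cong) (simp_all add: comp_perm_eq[OF s] d1_comp_inv[OF s])
        also have "\<dots> = (\<Sum>x\<in>UNIV. if r \<circ> \<sigma> = d1 x then u x else 0)"
          using sum.permute[OF permutes_inv[OF s], of "\<lambda>x. if r \<circ> \<sigma> = d1 x then u x else 0"]
          by (simp add: comp_def)
        also have "\<dots> = tab_act \<sigma> (f X) r"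
          unfolding tab_act_def u f_def phiM[OF u(2)] by simp
        finally show "f (conj_act \<sigma> X) r = tab_act \<sigma> (f X) r" .
      qed
    qed
    show "G t \<in> ?W" if "t \<in> tableaux [CARD('n) - 1, 1]" for t
    proof -
      interpret T: tab_n1 t using that n2 by unfold_locales
      have "(\<Sum>x\<in>UNIV. (if x = T.a then 1 else 0) - (if x = T.b then 1 else (0::real))) = 0"
        by (simp add: sum_subtractf)
      then show ?thesis unfolding G_def by blast
    qed
    show "f (G t) = polytabloid t" if "t \<in> tableaux [CARD('n) - 1, 1]" for t
    proof -
      interpret T: tab_n1 t using that n2 by unfold_locales
      have s0: "(\<Sum>x\<in>UNIV. (if x = T.a then 1 else 0) - (if x = T.b then 1 else (0::real))) = 0"
        by (simp add: sum_subtractf)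
      show ?thesis
      proof
        fix r
        have "f (G t) r = (\<Sum>x\<in>UNIV. (if r = d1 x then (if x = T.a then 1 else 0) else 0) - (if r = d1 x then (if x = T.b then 1 else 0) else (0::real)))"
          unfolding G_def f_def phiM[OF s0] by (rule sum.cong) auto
        also have "\<dots> = (if r = d1 T.a then 1 else 0) - (if r = d1 T.b then 1 else 0)"
          by (simp only: sum_subtractf sum_if_delta)
        finally show "f (G t) r = polytabloid t r" by (simp add: T.polytab)
      qed
    qed
    show "?W \<subseteq> span (G ` tableaux [CARD('n) - 1, 1])"
    proof
      fix X assume "X \<in> ?W"
      then obtain u where u: "X = M u" "sum u UNIV = 0" by blast
      obtain x0 :: 'n where True by blast
      define w where "w x = (\<lambda>i. (if i = x then 1 else 0) - (if i = x0 then 1 else (0::real)))" for x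
      have "(\<lambda>i. \<Sum>x\<in>UNIV. u x * w x i) = u"
      proof
        fix i
        have "(\<Sum>x\<in>UNIV. u x * w x i) = (\<Sum>x\<in>UNIV. (if x = i then u x else 0)) - (if i = x0 then 1 else 0) * sum u UNIV"
          unfolding w_def sum_distrib_right by (simp add: right_diff_distrib sum_subtractf sum_mult_delta1 sum_mult_delta2)
        then show "(\<Sum>x\<in>UNIV. u x * w x i) = u i" using u(2) by simp
      qed
      then have "X = (\<Sum>x\<in>UNIV. u x *\<^sub>R M (w x))" using Msum[of UNIV u w] u(1) by simp
      moreover have "M (w x) \<in> span (G ` tableaux [CARD('n) - 1, 1])" for x
      proof (cases "x = x0")
        case True
        then have "w x = (\<lambda>i. 0)" by (simp add: w_def fun_eq_iff)
        then show ?thesis using M0 by (simp add: span_zero)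
      next
        case False
        have "CARD('n) = card (cells [CARD('n) - 1, 1])" using n2 by (simp add: card_cells2)
        then obtain t where t: "t \<in> tableaux [CARD('n) - 1, 1]" "map t [x, x0] = [(1,0), (0,0)]"
          using exists_tableau[of "[CARD('n) - 1, 1]" "[x, x0]" "[(1,0), (0,0)]"] False n2
          by (auto simp: cells2)
        interpret T: tab_n1 t using t n2 by unfold_locales
        have tx: "t x = (1,0)" "t x0 = (0,0)" using t(2) by auto
        have "T.a = x" "T.b = x0" using T.ta T.tb T.t_eq tx by metis+
        then have "G t = M (w x)" by (simp add: G_def w_def)
        then show ?thesis using t(1) by (metis imageI span_base)
      qed
      ultimately show "X \<in> span (G ` tableaux [CARD('n) - 1, 1])"
        by (simp add: span_sum span_scale)
    qed
  qed
qed


definition Em :: "'n::finite \<Rightarrow> 'n \<Rightarrow> real^'n^'n" where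
  "Em p q = (\<chi> x y. if x = p \<and> y = q then 1 else 0)"

lemma Em_entry: "Em p q $ x $ y = (if x = p \<and> y = q then 1 else 0)"
  by (simp add: Em_def)

lemma Em_rowsum: "(\<Sum>y\<in>UNIV. Em p q $ x $ y) = (if x = p then 1 else 0)"
proof -
  have "(\<Sum>y\<in>UNIV. Em p q $ x $ y) = (\<Sum>y\<in>UNIV. if y = q then (if x = p then 1 else 0) else 0)"
    by (rule sum.cong) (auto simp: Em_entry)
  then show ?thesis by simp
qed

lemma sum2_delta:
  "(\<Sum>x\<in>(UNIV::'n::finite set). \<Sum>y\<in>(UNIV::'m::finite set). if P x y then (if x = p \<and> y = q then (k::real) else 0) else 0) = (if P p q then k else 0)"
proof -
  have "(\<Sum>y\<in>(UNIV::'m set). if P x y then (if x = p \<and> y = q then (k::real) else 0) else 0) =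
        (if x = p then (if P p q then k else 0) else 0)" for x
  proof -
    have "(\<Sum>y\<in>(UNIV::'m set). if P x y then (if x = p \<and> y = q then (k::real) else 0) else 0) =
          (\<Sum>y\<in>(UNIV::'m set). if y = q then (if x = p \<and> P x q then k else 0) else 0)"
      by (rule sum.cong) auto
    then show ?thesis by auto
  qed
  then show ?thesis by simp
qed

definition Am :: "'n::finite \<Rightarrow> 'n \<Rightarrow> real^'n^'n" where
  "Am p q = Em p q - Em q p"

lemma Am_entry: "Am p q $ i $ j = (if i = p \<and> j = q then 1 else 0) - (if i = q \<and> j = p then 1 else 0)"
  by (simp add: Am_def Em_entry)

lemma Am_anti: "Am p q $ i $ j = - Am p q $ j $ i"
  unfolding Am_entry by (cases "i = p"; cases "j = q"; cases "i = q"; cases "j = p") simp_all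

lemma Am_rowsum: "(\<Sum>j\<in>UNIV. Am p q $ i $ j) = (if i = p then 1 else 0) - (if i = q then 1 else 0)"
  unfolding Am_def vector_minus_component sum_subtractf Em_rowsum ..

definition Tri :: "'n::finite \<Rightarrow> 'n \<Rightarrow> 'n \<Rightarrow> real^'n^'n" where
  "Tri c a b = Am a b + Am b c + Am c a"

lemma Tri_entry: "Tri c a b $ i $ j = Am a b $ i $ j + Am b c $ i $ j + Am c a $ i $ j"
  by (simp add: Tri_def)

lemma Tri_Anti: "Tri c a b \<in> Anti"
proof -
  have r: "(\<Sum>j\<in>UNIV. Tri c a b $ i $ j) = 0" for i
    unfolding Tri_entry sum.distrib Am_rowsum by simp
  have "Tri c a b $ i $ j = - Tri c a b $ j $ i" for i j
    unfolding Tri_entry using Am_anti[of a b i j] Am_anti[of b c i j] Am_anti[of c a i j] by simp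
  with r show ?thesis unfolding Anti_iff by blast
qed

lemma AntiD:
  assumes "X \<in> Anti"
  shows "(\<Sum>j\<in>UNIV. X $ i $ j) = 0" "X $ i $ j = - X $ j $ i"
  using assms unfolding Anti_iff by blast+

lemma Anti_sub: "subspace Anti"
  unfolding subspace_def
proof (intro conjI ballI allI)
  show "0 \<in> Anti" by (simp add: Anti_iff)
  fix X Y :: "real^'n^'n" assume "X \<in> Anti" "Y \<in> Anti"
  then have a: "\<And>i. (\<Sum>j\<in>UNIV. X $ i $ j) = 0" "\<And>i j. X $ i $ j = - X $ j $ i"
    "\<And>i. (\<Sum>j\<in>UNIV. Y $ i $ j) = 0" "\<And>i j. Y $ i $ j = - Y $ j $ i" by (auto dest: AntiD)
  have "(\<Sum>j\<in>UNIV. (X + Y) $ i $ j) = 0" for i using a(1,3) by (simp add: sum.distrib)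
  moreover have "(X + Y) $ i $ j = - (X + Y) $ j $ i" for i j using a(2)[of i j] a(4)[of i j] by simp
  ultimately show "X + Y \<in> Anti" unfolding Anti_iff by blast
next
  fix c :: real and X :: "real^'n^'n" assume "X \<in> Anti"
  then have a: "\<And>i. (\<Sum>j\<in>UNIV. X $ i $ j) = 0" "\<And>i j. X $ i $ j = - X $ j $ i" by (auto dest: AntiD)
  have "(\<Sum>j\<in>UNIV. (c *\<^sub>R X) $ i $ j) = 0" for i using a(1) by (simp add: sum_distrib_left[symmetric])
  moreover have "(c *\<^sub>R X) $ i $ j = - (c *\<^sub>R X) $ j $ i" for i j using a(2)[of i j] by simp
  ultimately show "c *\<^sub>R X \<in> Anti" unfolding Anti_iff by blast
qed

lemma rowsum_perm:
  assumes "\<sigma> permutes UNIV"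
  shows "(\<Sum>j\<in>UNIV. X $ k $ inv \<sigma> j) = (\<Sum>j\<in>UNIV. X $ k $ j)"
  using sum.permute[OF permutes_inv[OF assms], of "\<lambda>j. X $ k $ j"] by (simp add: comp_def)

lemma Anti_conj:
  assumes s: "\<sigma> permutes UNIV" and X: "X \<in> Anti"
  shows "conj_act \<sigma> X \<in> Anti"
proof -
  have a: "\<And>i. (\<Sum>j\<in>UNIV. X $ i $ j) = 0" "\<And>i j. X $ i $ j = - X $ j $ i" using AntiD[OF X] by blast+
  have "(\<Sum>j\<in>UNIV. conj_act \<sigma> X $ i $ j) = 0" for i
    unfolding conj_entry[OF s] rowsum_perm[OF s] by (rule a(1))
  moreover have "conj_act \<sigma> X $ i $ j = - conj_act \<sigma> X $ j $ i" for i j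
    unfolding conj_entry[OF s] by (rule a(2))
  ultimately show ?thesis unfolding Anti_iff by blast
qed

definition d3 :: "'n \<Rightarrow> 'n \<Rightarrow> 'n \<Rightarrow> nat" where
  "d3 x y = (\<lambda>z. if z = x then 1 else if z = y then 2 else 0)"

lemma d3_inj:
  assumes "x \<noteq> y" "p \<noteq> q"
  shows "d3 x y = d3 p q \<longleftrightarrow> x = p \<and> y = q"
proof
  assume h: "d3 x y = d3 p q"
  have "d3 x y x = d3 p q x" "d3 x y y = d3 p q y" using h by simp_all
  then show "x = p \<and> y = q" using assms by (auto simp: d3_def split: if_splits)
qed simp

lemma d3_eqD: "d3 p q = d3 x y \<Longrightarrow> x \<noteq> y \<Longrightarrow> p \<noteq> q \<Longrightarrow> x = p \<and> y = q"
  using d3_inj by metis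

lemma d3_comp_inv:
  assumes "\<sigma> permutes UNIV"
  shows "d3 (inv \<sigma> x) (inv \<sigma> y) \<circ> inv \<sigma> = d3 x y"
proof
  fix z
  have "\<And>w. (inv \<sigma> z = inv \<sigma> w) = (z = w)" using assms by (metis permutes_inverses(1))
  then show "(d3 (inv \<sigma> x) (inv \<sigma> y) \<circ> inv \<sigma>) z = d3 x y z" by (simp add: d3_def)
qed

definition f3 :: "real^'n::finite^'n \<Rightarrow> ('n \<Rightarrow> nat) \<Rightarrow> real" where
  "f3 X = (\<lambda>r. \<Sum>x\<in>UNIV. \<Sum>y\<in>UNIV. if x \<noteq> y \<and> r = d3 x y then X $ x $ y else 0)"

lemma f3_add: "f3 (X + Y) = (\<lambda>r. f3 X r + f3 Y r)"
  by (auto simp: f3_def fun_eq_iff sum.distrib[symmetric] intro!: sum.cong)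

lemma f3_scal: "f3 (c *\<^sub>R X) = (\<lambda>r. c * f3 X r)"
  by (auto simp: f3_def fun_eq_iff sum_distrib_left intro!: sum.cong)

lemma f3_diff: "f3 (X - Y) = (\<lambda>r. f3 X r - f3 Y r)"
  by (auto simp: f3_def fun_eq_iff sum_subtractf[symmetric] intro!: sum.cong)

lemma f3_Em: "f3 (Em p q) = (\<lambda>r. if p \<noteq> q \<and> r = d3 p q then 1 else 0)"
  unfolding f3_def Em_entry by (rule ext) (rule sum2_delta)

lemma f3_at:
  assumes "p \<noteq> q"
  shows "f3 X (d3 p q) = X $ p $ q"
proof -
  have "f3 X (d3 p q) = (\<Sum>x\<in>UNIV. \<Sum>y\<in>UNIV. if x \<noteq> y \<and> d3 p q = d3 x y then (if x = p \<and> y = q then X $ p $ q else 0) else 0)"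
    unfolding f3_def using assms by (intro sum.cong refl) (auto dest: d3_eqD)
  also have "\<dots> = X $ p $ q" using assms by (simp only: sum2_delta) simp
  finally show ?thesis .
qed

lemma f3_eqv:
  assumes s: "\<sigma> permutes UNIV"
  shows "f3 (conj_act \<sigma> X) = tab_act \<sigma> (f3 X)"
proof
  fix r
  let ?g = "\<lambda>x y. if x \<noteq> y \<and> r \<circ> \<sigma> = d3 x y then X $ x $ y else 0"
  have ii: "\<And>x y. (inv \<sigma> x = inv \<sigma> y) = (x = y)" using s by (metis permutes_inverses(1))
  have "f3 (conj_act \<sigma> X) r = (\<Sum>x\<in>UNIV. \<Sum>y\<in>UNIV. ?g (inv \<sigma> x) (inv \<sigma> y))"
    unfolding f3_def conj_entry[OF s]
    by (intro sum.cong refl) (simp add: ii comp_perm_eq[OF s] d3_comp_inv[OF s])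
  also have "\<dots> = (\<Sum>x\<in>UNIV. \<Sum>y\<in>UNIV. ?g (inv \<sigma> x) y)"
  proof (rule sum.cong[OF refl])
    fix x
    show "(\<Sum>y\<in>UNIV. ?g (inv \<sigma> x) (inv \<sigma> y)) = (\<Sum>y\<in>UNIV. ?g (inv \<sigma> x) y)"
      using sum.permute[OF permutes_inv[OF s], of "\<lambda>y. ?g (inv \<sigma> x) y"] by (simp only: comp_def)
  qed
  also have "\<dots> = (\<Sum>x\<in>UNIV. \<Sum>y\<in>UNIV. ?g x y)"
    using sum.permute[OF permutes_inv[OF s], of "\<lambda>x. \<Sum>y\<in>UNIV. ?g x y"] by (simp add: comp_def)
  also have "\<dots> = tab_act \<sigma> (f3 X) r" by (simp add: tab_act_def f3_def)
  finally show "f3 (conj_act \<sigma> X) r = tab_act \<sigma> (f3 X) r" .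
qed

lemma f3_inj:
  assumes "X \<in> Anti" "f3 X = (\<lambda>r. 0)"
  shows "X = 0"
proof -
  have a: "X $ i $ j = - X $ j $ i" for i j using AntiD[OF assms(1)] by blast
  have "X $ i $ j = 0" for i j
  proof (cases "i = j")
    case True then show ?thesis using a[of i i] by simp
  next
    case False then show ?thesis using f3_at[OF False, of X] assms(2) by simp
  qed
  then show ?thesis by (simp add: vec_eq_iff)
qed

lemma f3_Tri:
  assumes "c \<noteq> a" "c \<noteq> b" "a \<noteq> b"
  shows "f3 (Tri c a b) = (\<lambda>r. (if r = d3 a b then 1 else 0) - (if r = d3 b a then 1 else 0)
      + ((if r = d3 b c then 1 else 0) - (if r = d3 c b then 1 else 0))
      + ((if r = d3 c a then 1 else 0) - (if r = d3 a c then 1 else 0)))"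
  using assms by (simp add: Tri_def Am_def f3_add f3_diff f3_Em)


lemma tabloid_comp_inv:
  assumes "\<pi> permutes UNIV"
  shows "tabloid_of (t \<circ> inv \<pi>) = tabloid_of t \<circ> inv \<pi>"
  by (simp add: tabloid_of_def o_assoc)

locale tab_n11 =
  fixes t :: "'n::finite \<Rightarrow> nat \<times> nat"
  assumes tt: "t \<in> tableaux [CARD('n) - 2, 1, 1]"
  and n4: "CARD('n) \<ge> 4"
begin

definition "c = inv t (0, 0)"
definition "a = inv t (1, 0)"
definition "b = inv t (2, 0)"

lemma cin: "(0,0) \<in> cells [CARD('n) - 2, 1, 1]" "(1,0) \<in> cells [CARD('n) - 2, 1, 1]" "(2,0) \<in> cells [CARD('n) - 2, 1, 1]"
  using n4 by (simp_all add: cells3)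

lemma tc: "t c = (0, 0)" unfolding c_def by (rule tab_inv[OF tt cin(1)])
lemma ta: "t a = (1, 0)" unfolding a_def by (rule tab_inv[OF tt cin(2)])
lemma tb: "t b = (2, 0)" unfolding b_def by (rule tab_inv[OF tt cin(3)])
lemma dist: "c \<noteq> a" "c \<noteq> b" "a \<noteq> b" using ta tb tc by auto

lemma t_eq: "t x = t y \<longleftrightarrow> x = y" using tabD(2)[OF tt] by (auto simp: inj_eq)

lemma cell: "(fst (t x) = 0 \<and> snd (t x) < CARD('n) - 2) \<or> t x = (1, 0) \<or> t x = (2, 0)"
  using tabD(3)[OF tt, of x] by (auto simp: cells3 prod_eq_iff)

lemma tabloid: "tabloid_of t = d3 a b"
proof
  fix z
  show "tabloid_of t z = d3 a b z"
  proof (cases "z = a \<or> z = b")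
    case True then show ?thesis using dist by (auto simp: tabloid_of_def d3_def ta tb)
  next
    case False
    then have "t z \<noteq> (1, 0)" "t z \<noteq> (2, 0)" using ta tb t_eq by metis+
    then show ?thesis using cell[of z] False by (auto simp: tabloid_of_def d3_def)
  qed
qed

lemma tabloid_pi:
  assumes "\<pi> permutes UNIV"
  shows "tabloid_of (t \<circ> inv \<pi>) = d3 (\<pi> a) (\<pi> b)"
proof
  fix z
  have e: "(inv \<pi> z = w) = (z = \<pi> w)" for w using assms by (metis permutes_inverses(1) permutes_inverses(2))
  show "tabloid_of (t \<circ> inv \<pi>) z = d3 (\<pi> a) (\<pi> b) z"
    unfolding tabloid_comp_inv[OF assms] tabloid by (simp add: d3_def e)
qed

lemma col_stab_eq: "col_stab t = {\<pi>. \<pi> permutes {c, a, b}}"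
proof
  show "col_stab t \<subseteq> {\<pi>. \<pi> permutes {c, a, b}}"
  proof
    fix \<pi> assume p: "\<pi> \<in> col_stab t"
    have "\<pi> z = z" if "z \<notin> {c, a, b}" for z
    proof -
      have "z \<noteq> a" "z \<noteq> b" "z \<noteq> c" using that by auto
      then have "t z \<noteq> (1,0)" "t z \<noteq> (0,0)" "t z \<noteq> (2,0)" using ta tb tc t_eq by metis+
      then have "fst (t z) = 0" "snd (t z) \<noteq> 0" using cell[of z] by (auto simp: prod_eq_iff)
      moreover have "snd (t (\<pi> z)) = snd (t z)" by (rule col_stabD(2)[OF p])
      ultimately have "t (\<pi> z) = t z" using cell[of "\<pi> z"] by (auto simp: prod_eq_iff)
      then show ?thesis by (simp add: t_eq)
    qed
    then show "\<pi> \<in> {\<pi>. \<pi> permutes {c, a, b}}"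
      using permutes_superset[OF col_stabD(1)[OF p], of "{c, a, b}"] by auto
  qed
  show "{\<pi>. \<pi> permutes {c, a, b}} \<subseteq> col_stab t"
  proof
    fix \<pi> assume "\<pi> \<in> {\<pi>. \<pi> permutes {c, a, b}}"
    then have p: "\<pi> permutes {c, a, b}" by simp
    have "snd (t (\<pi> x)) = snd (t x)" for x
    proof (cases "x \<in> {c, a, b}")
      case True
      then have "\<pi> x \<in> {c, a, b}" using permutes_in_image[OF p] by simp
      then show ?thesis using True ta tb tc by auto
    next
      case False then show ?thesis using p by (simp add: permutes_not_in)
    qed
    then show "\<pi> \<in> col_stab t" using permutes_subset[OF p] by (simp add: col_stab_def)
  qed
qed

lemma polytab: "polytabloid t = (\<lambda>r. (if r = d3 a b then 1 else 0) - (if r = d3 b a then 1 else 0)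
      + ((if r = d3 b c then 1 else 0) - (if r = d3 c b then 1 else 0))
      + ((if r = d3 c a then 1 else 0) - (if r = d3 a c then 1 else 0)))"
proof
  fix r
  define F where "F \<pi> = (if d3 (\<pi> a) (\<pi> b) = r then real_of_int (sign \<pi>) else 0)" for \<pi>
  have "polytabloid t r = (\<Sum>\<pi>\<in>{\<pi>. \<pi> permutes {c, a, b}}. F \<pi>)"
    unfolding polytabloid_def col_stab_eq F_def
    by (rule sum.cong) (auto simp: tabloid_pi dest: permutes_subset[of _ _ UNIV])
  also have "\<dots> = (\<Sum>u\<in>{c, a, b}. \<Sum>v\<in>{a, b}. F (sw c u \<circ> sw a v))"
    using dist by (simp add: sum_over_permutations_insert permutes_sing)
  also have "\<dots> = (if r = d3 a b then 1 else 0) - (if r = d3 b a then 1 else 0)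
      + ((if r = d3 b c then 1 else 0) - (if r = d3 c b then 1 else 0))
      + ((if r = d3 c a then 1 else 0) - (if r = d3 a c then 1 else 0))"
    using dist by (simp add: F_def sign_compose permutation_swap_id sign_swap_id eq_commute[of "d3 _ _" r])
  finally show "polytabloid t r = \<dots>" .
qed

end


lemma sum2_delta': "(\<Sum>x\<in>(UNIV::'n::finite set). \<Sum>y\<in>(UNIV::'m::finite set). if x = p \<and> y = q then (k::real) else 0) = k"
  using sum2_delta[of "\<lambda>x y. True" p q k] by simp

lemma Anti_zero:
  assumes Y: "Y \<in> Anti" and z: "\<And>i j. i \<noteq> c0 \<Longrightarrow> j \<noteq> c0 \<Longrightarrow> Y $ i $ j = 0"
  shows "Y = 0"
proof -
  have ic: "Y $ i $ c0 = 0" if "i \<noteq> c0" for i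
  proof -
    have "0 = (\<Sum>j\<in>UNIV. Y $ i $ j)" using AntiD(1)[OF Y] by simp
    also have "\<dots> = (\<Sum>j\<in>UNIV. if j = c0 then Y $ i $ c0 else 0)"
      by (rule sum.cong) (auto simp: z[OF that])
    also have "\<dots> = Y $ i $ c0" by simp
    finally show ?thesis by simp
  qed
  have "Y $ i $ j = 0" for i j
  proof (cases "i = c0")
    case True
    show ?thesis
    proof (cases "j = c0")
      case True then show ?thesis using \<open>i = c0\<close> AntiD(2)[OF Y, of c0 c0] by simp
    next
      case False then show ?thesis using \<open>i = c0\<close> AntiD(2)[OF Y, of i j] ic[OF False] by simp
    qed
  next
    case False then show ?thesis using z ic by (cases "j = c0") auto
  qed
  then show ?thesis by (simp add: vec_eq_iff)
qed

lemma specht_anti: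
  assumes n4: "CARD('n::finite) \<ge> 4"
  shows "spechtIso (Anti :: (real^'n^'n) set) [CARD('n) - 2, 1, 1]"
proof (rule spechtIso_gen[where f = f3 and G = "\<lambda>t. Tri (tab_n11.c t) (tab_n11.a t) (tab_n11.b t)"])
  show "subspace (Anti :: (real^'n^'n) set)" by (rule Anti_sub)
  show "conj_act \<sigma> X \<in> Anti" if "\<sigma> permutes UNIV" "X \<in> Anti" for \<sigma> :: "'n \<Rightarrow> 'n" and X :: "real^'n^'n"
    using Anti_conj that by blast
  show "f3 (X + Y) = (\<lambda>r. f3 X r + f3 Y r)" for X Y :: "real^'n^'n" by (rule f3_add)
  show "f3 (c *\<^sub>R X) = (\<lambda>r. c * f3 X r)" for c and X :: "real^'n^'n" by (rule f3_scal)
  show "X = 0" if "X \<in> Anti" "f3 X = (\<lambda>r. 0)" for X :: "real^'n^'n" using f3_inj that by blast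
  show "f3 (conj_act \<sigma> X) = tab_act \<sigma> (f3 X)" if "\<sigma> permutes UNIV" "X \<in> Anti" for \<sigma> :: "'n \<Rightarrow> 'n" and X :: "real^'n^'n"
    using f3_eqv that by blast
  show "Tri (tab_n11.c t) (tab_n11.a t) (tab_n11.b t) \<in> (Anti :: (real^'n^'n) set)" for t :: "'n \<Rightarrow> nat \<times> nat"
    by (rule Tri_Anti)
  show "f3 (Tri (tab_n11.c t) (tab_n11.a t) (tab_n11.b t)) = polytabloid t"
    if "t \<in> tableaux [CARD('n) - 2, 1, 1]" for t :: "'n \<Rightarrow> nat \<times> nat"
  proof -
    interpret T: tab_n11 t using that n4 by unfold_locales
    show ?thesis using T.dist by (simp add: f3_Tri T.polytab)
  qed
  show "(Anti :: (real^'n^'n) set) \<subseteq> span ((\<lambda>t. Tri (tab_n11.c t) (tab_n11.a t) (tab_n11.b t)) ` tableaux [CARD('n) - 2, 1, 1])"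
  proof
    fix X :: "real^'n^'n" assume X: "X \<in> Anti"
    obtain c0 :: 'n where True by blast
    define coef where "coef a b = (if a \<noteq> c0 \<and> b \<noteq> c0 \<and> a \<noteq> b then X $ a $ b / 2 else 0)" for a b
    define S where "S = (\<Sum>a\<in>UNIV. \<Sum>b\<in>UNIV. coef a b *\<^sub>R Tri c0 a b)"
    have SA: "S \<in> Anti" unfolding S_def
      by (intro subspace_sum[OF Anti_sub] subspace_scale[OF Anti_sub] Tri_Anti)
    have YA: "X - S \<in> Anti" using subspace_diff[OF Anti_sub X SA] .
    have Sij: "S $ i $ j = X $ i $ j" if "i \<noteq> c0" "j \<noteq> c0" "i \<noteq> j" for i j
    proof -
      have "S $ i $ j = (\<Sum>a\<in>UNIV. \<Sum>b\<in>UNIV. (if a = i \<and> b = j then coef i j else 0) - (if a = j \<and> b = i then coef j i else 0))"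
        unfolding S_def sum_component vector_scaleR_component Tri_entry Am_entry
        using that by (intro sum.cong refl) auto
      also have "\<dots> = coef i j - coef j i" by (simp add: sum_subtractf sum2_delta')
      also have "\<dots> = X $ i $ j" using that AntiD(2)[OF X, of j i] by (simp add: coef_def)
      finally show ?thesis .
    qed
    have "X - S = 0"
    proof (rule Anti_zero[OF YA])
      fix i j assume ij: "i \<noteq> c0" "j \<noteq> c0"
      show "(X - S) $ i $ j = 0"
      proof (cases "i = j")
        case True then show ?thesis using AntiD(2)[OF YA, of i i] by simp
      next
        case False then show ?thesis using Sij[OF ij False] by simp
      qed
    qed
    then have XS: "X = S" by simp
    have "Tri c0 a b \<in> span ((\<lambda>t. Tri (tab_n11.c t) (tab_n11.a t) (tab_n11.b t)) ` (tableaux [CARD('n) - 2, 1, 1] :: ('n \<Rightarrow> nat \<times> nat) set))"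
      if ne: "a \<noteq> c0" "b \<noteq> c0" "a \<noteq> b" for a b
    proof -
      have "CARD('n) = card (cells [CARD('n) - 2, 1, 1])" using n4 by (simp add: card_cells3)
      then obtain t :: "'n \<Rightarrow> nat \<times> nat" where t: "t \<in> tableaux [CARD('n) - 2, 1, 1]" "map t [c0, a, b] = [(0,0), (1,0), (2,0)]"
        using exists_tableau[of "[CARD('n) - 2, 1, 1]" "[c0, a, b]" "[(0,0), (1,0), (2,0)]"] ne n4
        by (auto simp: cells3)
      interpret T: tab_n11 t using t n4 by unfold_locales
      have tx: "t c0 = (0,0)" "t a = (1,0)" "t b = (2,0)" using t(2) by auto
      have "T.c = c0" "T.a = a" "T.b = b" using T.ta T.tb T.tc T.t_eq tx by metis+
      then show ?thesis using t(1) by (metis (mono_tags, lifting) imageI span_base)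
    qed
    then have "coef a b *\<^sub>R Tri c0 a b \<in> span ((\<lambda>t. Tri (tab_n11.c t) (tab_n11.a t) (tab_n11.b t)) ` (tableaux [CARD('n) - 2, 1, 1] :: ('n \<Rightarrow> nat \<times> nat) set))" for a b
      by (cases "a \<noteq> c0 \<and> b \<noteq> c0 \<and> a \<noteq> b") (auto simp: coef_def span_scale span_zero)
    then show "X \<in> span ((\<lambda>t. Tri (tab_n11.c t) (tab_n11.a t) (tab_n11.b t)) ` tableaux [CARD('n) - 2, 1, 1])"
      unfolding XS S_def by (intro span_sum) auto
  qed
qed


definition Sm :: "'n::finite \<Rightarrow> 'n \<Rightarrow> real^'n^'n" where
  "Sm p q = Em p q + Em q p"

lemma Sm_entry: "Sm p q $ i $ j = (if i = p \<and> j = q then 1 else 0) + (if i = q \<and> j = p then 1 else 0)"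
  by (simp add: Sm_def Em_entry)

lemma Sm_sym: "Sm p q $ i $ j = Sm p q $ j $ i"
  unfolding Sm_entry by (cases "i = p"; cases "j = q"; cases "i = q"; cases "j = p") simp_all

lemma Sm_diag: "p \<noteq> q \<Longrightarrow> Sm p q $ i $ i = 0"
  unfolding Sm_entry by (cases "i = p"; cases "i = q") simp_all

lemma Sm_rowsum: "(\<Sum>j\<in>UNIV. Sm p q $ i $ j) = (if i = p then 1 else 0) + (if i = q then 1 else 0)"
  unfolding Sm_def vector_add_component sum.distrib Em_rowsum ..

definition Q :: "'n::finite \<Rightarrow> 'n \<Rightarrow> 'n \<Rightarrow> 'n \<Rightarrow> real^'n^'n" where
  "Q a b c d = Sm a b - Sm b c + Sm c d - Sm d a"

lemma Q_entry: "Q a b c d $ i $ j = Sm a b $ i $ j - Sm b c $ i $ j + Sm c d $ i $ j - Sm d a $ i $ j"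
  by (simp add: Q_def)

definition W2 :: "(real^'n::finite^'n) set" where
  "W2 = {X \<in> Symm. \<forall>i. X $ i $ i = 0}"

lemma W2_iff: "X \<in> W2 \<longleftrightarrow> (\<forall>i. (\<Sum>j\<in>UNIV. X $ i $ j) = 0) \<and> (\<forall>i j. X $ i $ j = X $ j $ i) \<and> (\<forall>i. X $ i $ i = 0)"
  unfolding W2_def Symm_iff by blast

lemma W2D:
  assumes "X \<in> W2"
  shows "(\<Sum>j\<in>UNIV. X $ i $ j) = 0" "X $ i $ j = X $ j $ i" "X $ i $ i = 0"
  using assms unfolding W2_iff by blast+

lemma Q_W2:
  assumes "a \<noteq> b" "b \<noteq> c" "c \<noteq> d" "d \<noteq> a"
  shows "Q a b c d \<in> W2"
proof -
  have r: "(\<Sum>j\<in>UNIV. Q a b c d $ i $ j) = 0" for i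
    unfolding Q_entry sum.distrib sum_subtractf Sm_rowsum by simp
  have s: "Q a b c d $ i $ j = Q a b c d $ j $ i" for i j
    unfolding Q_entry using Sm_sym[of a b i j] Sm_sym[of b c i j] Sm_sym[of c d i j] Sm_sym[of d a i j] by simp
  have d: "Q a b c d $ i $ i = 0" for i
    unfolding Q_entry using assms by (simp add: Sm_diag)
  show ?thesis unfolding W2_iff using r s d by blast
qed

lemma W2_sub: "subspace W2"
  unfolding subspace_def
proof (intro conjI ballI allI)
  show "0 \<in> W2" by (simp add: W2_iff)
  fix X Y :: "real^'n^'n" assume a: "X \<in> W2" "Y \<in> W2"
  have "(\<Sum>j\<in>UNIV. (X + Y) $ i $ j) = 0" for i using W2D(1)[OF a(1)] W2D(1)[OF a(2)] by (simp add: sum.distrib)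
  moreover have "(X + Y) $ i $ j = (X + Y) $ j $ i" for i j using W2D(2)[OF a(1), of i j] W2D(2)[OF a(2), of i j] by simp
  moreover have "(X + Y) $ i $ i = 0" for i using W2D(3)[OF a(1), of i] W2D(3)[OF a(2), of i] by simp
  ultimately show "X + Y \<in> W2" unfolding W2_iff by blast
next
  fix c :: real and X :: "real^'n^'n" assume a: "X \<in> W2"
  have "(\<Sum>j\<in>UNIV. (c *\<^sub>R X) $ i $ j) = 0" for i using W2D(1)[OF a] by (simp add: sum_distrib_left[symmetric])
  moreover have "(c *\<^sub>R X) $ i $ j = (c *\<^sub>R X) $ j $ i" for i j using W2D(2)[OF a, of i j] by simp
  moreover have "(c *\<^sub>R X) $ i $ i = 0" for i using W2D(3)[OF a, of i] by simp
  ultimately show "c *\<^sub>R X \<in> W2" unfolding W2_iff by blast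
qed

lemma W2_conj:
  assumes s: "\<sigma> permutes UNIV" and X: "X \<in> W2"
  shows "conj_act \<sigma> X \<in> W2"
proof -
  have "(\<Sum>j\<in>UNIV. conj_act \<sigma> X $ i $ j) = 0" for i
    unfolding conj_entry[OF s] rowsum_perm[OF s] by (rule W2D(1)[OF X])
  moreover have "conj_act \<sigma> X $ i $ j = conj_act \<sigma> X $ j $ i" for i j
    unfolding conj_entry[OF s] by (rule W2D(2)[OF X])
  moreover have "conj_act \<sigma> X $ i $ i = 0" for i
    unfolding conj_entry[OF s] by (rule W2D(3)[OF X])
  ultimately show ?thesis unfolding W2_iff by blast
qed

definition d2 :: "'n \<Rightarrow> 'n \<Rightarrow> 'n \<Rightarrow> nat" where
  "d2 x y = (\<lambda>z. if z = x \<or> z = y then 1 else 0)"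

lemma d2_comm: "d2 x y = d2 y x"
  unfolding d2_def by (rule ext) (simp add: disj_commute)

lemma d2_eqD:
  assumes "d2 p q = d2 x y" "x \<noteq> y" "p \<noteq> q"
  shows "(x = p \<and> y = q) \<or> (x = q \<and> y = p)"
proof -
  have "d2 x y x = 1" "d2 x y y = 1" by (simp_all add: d2_def)
  then have "d2 p q x = 1" "d2 p q y = 1" by (simp_all only: assms(1))
  then have "x = p \<or> x = q" "y = p \<or> y = q" unfolding d2_def by (metis zero_neq_one)+
  then show ?thesis using assms(2) by blast
qed

lemma d2_comp_inv:
  assumes "\<sigma> permutes UNIV"
  shows "d2 (inv \<sigma> x) (inv \<sigma> y) \<circ> inv \<sigma> = d2 x y"
proof
  fix z
  have "\<And>w. (inv \<sigma> z = inv \<sigma> w) = (z = w)" using assms by (metis permutes_inverses(1))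
  then show "(d2 (inv \<sigma> x) (inv \<sigma> y) \<circ> inv \<sigma>) z = d2 x y z" by (simp add: d2_def)
qed

definition f2 :: "real^'n::finite^'n \<Rightarrow> ('n \<Rightarrow> nat) \<Rightarrow> real" where
  "f2 X = (\<lambda>r. \<Sum>x\<in>UNIV. \<Sum>y\<in>UNIV. if x \<noteq> y \<and> r = d2 x y then X $ x $ y / 2 else 0)"

lemma f2_add: "f2 (X + Y) = (\<lambda>r. f2 X r + f2 Y r)"
  by (auto simp: f2_def fun_eq_iff sum.distrib[symmetric] add_divide_distrib intro!: sum.cong)

lemma f2_scal: "f2 (c *\<^sub>R X) = (\<lambda>r. c * f2 X r)"
  by (auto simp: f2_def fun_eq_iff sum_distrib_left intro!: sum.cong)

lemma f2_diff: "f2 (X - Y) = (\<lambda>r. f2 X r - f2 Y r)"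
  by (auto simp: f2_def fun_eq_iff sum_subtractf[symmetric] diff_divide_distrib intro!: sum.cong)

lemma f2_Em: "f2 (Em p q) = (\<lambda>r. if p \<noteq> q \<and> r = d2 p q then 1/2 else 0)"
proof
  fix r
  have "f2 (Em p q) r = (\<Sum>x\<in>UNIV. \<Sum>y\<in>UNIV. if x \<noteq> y \<and> r = d2 x y then (if x = p \<and> y = q then 1/2 else 0) else 0)"
    unfolding f2_def Em_entry by (intro sum.cong refl) auto
  also have "\<dots> = (if p \<noteq> q \<and> r = d2 p q then 1/2 else 0)" by (rule sum2_delta)
  finally show "f2 (Em p q) r = (if p \<noteq> q \<and> r = d2 p q then 1/2 else 0)" .
qed

lemma f2_Sm: "f2 (Sm p q) = (\<lambda>r. if p \<noteq> q \<and> r = d2 p q then 1 else 0)"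
  by (auto simp: Sm_def f2_add f2_Em fun_eq_iff d2_comm)

lemma f2_Q:
  assumes "a \<noteq> b" "b \<noteq> c" "c \<noteq> d" "d \<noteq> a"
  shows "f2 (Q a b c d) = (\<lambda>r. (if r = d2 a b then 1 else 0) - (if r = d2 b c then 1 else 0)
     + (if r = d2 c d then 1 else 0) - (if r = d2 d a then 1 else 0))"
  using assms by (simp add: Q_def f2_add f2_diff f2_Sm)

lemma f2_at:
  assumes "p \<noteq> q" "X \<in> W2"
  shows "f2 X (d2 p q) = X $ p $ q"
proof -
  have "f2 X (d2 p q) = (\<Sum>x\<in>UNIV. \<Sum>y\<in>UNIV. (if x = p \<and> y = q then X $ p $ q / 2 else 0) + (if x = q \<and> y = p then X $ q $ p / 2 else 0))"
    unfolding f2_def using assms(1) by (intro sum.cong refl) (auto dest: d2_eqD simp: d2_comm)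
  also have "\<dots> = X $ p $ q / 2 + X $ q $ p / 2" by (simp add: sum.distrib sum2_delta')
  also have "\<dots> = X $ p $ q" using W2D(2)[OF assms(2), of q p] by simp
  finally show ?thesis .
qed

lemma f2_inj:
  assumes "X \<in> W2" "f2 X = (\<lambda>r. 0)"
  shows "X = 0"
proof -
  have "X $ i $ j = 0" for i j
  proof (cases "i = j")
    case True then show ?thesis using W2D(3)[OF assms(1), of i] by simp
  next
    case False then show ?thesis using f2_at[OF False assms(1)] assms(2) by simp
  qed
  then show ?thesis by (simp add: vec_eq_iff)
qed

lemma f2_eqv:
  assumes s: "\<sigma> permutes UNIV"
  shows "f2 (conj_act \<sigma> X) = tab_act \<sigma> (f2 X)"
proof
  fix r
  let ?g = "\<lambda>x y. if x \<noteq> y \<and> r \<circ> \<sigma> = d2 x y then X $ x $ y / 2 else 0"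
  have ii: "\<And>x y. (inv \<sigma> x = inv \<sigma> y) = (x = y)" using s by (metis permutes_inverses(1))
  have "f2 (conj_act \<sigma> X) r = (\<Sum>x\<in>UNIV. \<Sum>y\<in>UNIV. ?g (inv \<sigma> x) (inv \<sigma> y))"
    unfolding f2_def conj_entry[OF s]
    by (intro sum.cong refl) (simp add: ii comp_perm_eq[OF s] d2_comp_inv[OF s])
  also have "\<dots> = (\<Sum>x\<in>UNIV. \<Sum>y\<in>UNIV. ?g (inv \<sigma> x) y)"
  proof (rule sum.cong[OF refl])
    fix x
    show "(\<Sum>y\<in>UNIV. ?g (inv \<sigma> x) (inv \<sigma> y)) = (\<Sum>y\<in>UNIV. ?g (inv \<sigma> x) y)"
      using sum.permute[OF permutes_inv[OF s], of "\<lambda>y. ?g (inv \<sigma> x) y"] by (simp only: comp_def)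
  qed
  also have "\<dots> = (\<Sum>x\<in>UNIV. \<Sum>y\<in>UNIV. ?g x y)"
    using sum.permute[OF permutes_inv[OF s], of "\<lambda>x. \<Sum>y\<in>UNIV. ?g x y"] by (simp add: comp_def)
  also have "\<dots> = tab_act \<sigma> (f2 X) r" by (simp add: tab_act_def f2_def)
  finally show "f2 (conj_act \<sigma> X) r = tab_act \<sigma> (f2 X) r" .
qed


locale tab_n2 =
  fixes t :: "'n::finite \<Rightarrow> nat \<times> nat"
  assumes tt: "t \<in> tableaux [CARD('n) - 2, 2]"
  and n4: "CARD('n) \<ge> 4"
begin

definition "c = inv t (0, 0)"
definition "d = inv t (0, 1)"
definition "a = inv t (1, 0)"
definition "b = inv t (1, 1)"

lemma cin: "(0,0) \<in> cells [CARD('n) - 2, 2]" "(0,1) \<in> cells [CARD('n) - 2, 2]"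
  "(1,0) \<in> cells [CARD('n) - 2, 2]" "(1,1) \<in> cells [CARD('n) - 2, 2]"
  using n4 by (simp_all add: cells2)

lemma tc: "t c = (0, 0)" unfolding c_def by (rule tab_inv[OF tt cin(1)])
lemma td: "t d = (0, 1)" unfolding d_def by (rule tab_inv[OF tt cin(2)])
lemma ta: "t a = (1, 0)" unfolding a_def by (rule tab_inv[OF tt cin(3)])
lemma tb: "t b = (1, 1)" unfolding b_def by (rule tab_inv[OF tt cin(4)])
lemma dist: "c \<noteq> a" "c \<noteq> b" "a \<noteq> b" "c \<noteq> d" "a \<noteq> d" "b \<noteq> d"
  using ta tb tc td by auto

lemma t_eq: "t x = t y \<longleftrightarrow> x = y" using tabD(2)[OF tt] by (auto simp: inj_eq)

lemma cell: "(fst (t x) = 0 \<and> snd (t x) < CARD('n) - 2) \<or> (fst (t x) = 1 \<and> snd (t x) < 2)"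
  using tabD(3)[OF tt, of x] by (simp add: cells2)

lemma tabloid: "tabloid_of t = d2 a b"
proof
  fix z
  show "tabloid_of t z = d2 a b z"
  proof (cases "z = a \<or> z = b")
    case True then show ?thesis by (auto simp: tabloid_of_def d2_def ta tb)
  next
    case False
    then have "t z \<noteq> (1, 0)" "t z \<noteq> (1, 1)" using ta tb t_eq by metis+
    then have "fst (t z) \<noteq> 1" using cell[of z] by (auto simp: prod_eq_iff less_2_cases_iff)
    then have "fst (t z) = 0" using cell[of z] by auto
    then show ?thesis using False by (auto simp: tabloid_of_def d2_def)
  qed
qed

lemma tabloid_pi:
  assumes "\<pi> permutes UNIV"
  shows "tabloid_of (t \<circ> inv \<pi>) = d2 (\<pi> a) (\<pi> b)"
proof
  fix z
  have e: "(inv \<pi> z = w) = (z = \<pi> w)" for w using assms by (metis permutes_inverses(1) permutes_inverses(2))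
  show "tabloid_of (t \<circ> inv \<pi>) z = d2 (\<pi> a) (\<pi> b) z"
    unfolding tabloid_comp_inv[OF assms] tabloid by (simp add: d2_def e)
qed

lemma col0: "snd (t x) = 0 \<longleftrightarrow> x = c \<or> x = a"
proof
  assume "snd (t x) = 0"
  then have "t x = (0,0) \<or> t x = (1,0)" using cell[of x] by (auto simp: prod_eq_iff)
  then have "t x = t c \<or> t x = t a" by (simp only: tc ta)
  then show "x = c \<or> x = a" by (simp only: t_eq)
qed (auto simp: tc ta)

lemma col1: "snd (t x) = 1 \<longleftrightarrow> x = d \<or> x = b"
proof
  assume "snd (t x) = 1"
  then have "t x = (0,1) \<or> t x = (1,1)" using cell[of x] by (auto simp: prod_eq_iff)
  then have "t x = t d \<or> t x = t b" by (simp only: td tb)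
  then show "x = d \<or> x = b" by (simp only: t_eq)
qed (auto simp: td tb)

lemma col_stab_eq: "col_stab t = {id, sw c a, sw d b, sw c a \<circ> sw d b}"
proof
  show "col_stab t \<subseteq> {id, sw c a, sw d b, sw c a \<circ> sw d b}"
  proof
    fix \<pi> assume p: "\<pi> \<in> col_stab t"
    have sp: "snd (t (\<pi> z)) = snd (t z)" for z by (rule col_stabD(2)[OF p])
    have fo: "\<pi> z = z" if "z \<notin> {c, a, d, b}" for z
    proof -
      have "snd (t z) \<noteq> 0" "snd (t z) \<noteq> 1" using that col0 col1 by auto
      then have "fst (t z) = 0" using cell[of z] by auto
      moreover have "snd (t (\<pi> z)) \<noteq> 0" "snd (t (\<pi> z)) \<noteq> 1" using sp[of z] \<open>snd (t z) \<noteq> 0\<close> \<open>snd (t z) \<noteq> 1\<close> by auto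
      then have "fst (t (\<pi> z)) = 0" using cell[of "\<pi> z"] by auto
      ultimately have "t (\<pi> z) = t z" using sp[of z] by (simp add: prod_eq_iff)
      then show ?thesis by (simp add: t_eq)
    qed
    have pa: "\<pi> a = c \<or> \<pi> a = a" "\<pi> c = c \<or> \<pi> c = a" "\<pi> b = d \<or> \<pi> b = b" "\<pi> d = d \<or> \<pi> d = b"
      using sp[of a] sp[of c] sp[of b] sp[of d] col0 col1 ta tb tc td by (metis fst_conv snd_conv)+
    have injp: "inj \<pi>" using col_stabD(1)[OF p] by (rule permutes_inj)
    have ne: "\<pi> c \<noteq> \<pi> a" "\<pi> d \<noteq> \<pi> b" using injp dist by (metis injD)+
    have e: "\<pi> = f" if "\<pi> a = f a" "\<pi> c = f c" "\<pi> b = f b" "\<pi> d = f d" "\<And>z. z \<notin> {c, a, d, b} \<Longrightarrow> f z = z" for f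
    proof
      fix z show "\<pi> z = f z" using that fo[of z] by (cases "z \<in> {c, a, d, b}") auto
    qed
    consider (1) "\<pi> a = a" "\<pi> b = b" | (2) "\<pi> a = c" "\<pi> b = b" | (3) "\<pi> a = a" "\<pi> b = d" | (4) "\<pi> a = c" "\<pi> b = d"
      using pa(1) pa(3) by blast
    then have "\<pi> = id \<or> \<pi> = sw c a \<or> \<pi> = sw d b \<or> \<pi> = sw c a \<circ> sw d b"
    proof cases
      case 1
      then have "\<pi> c = c" "\<pi> d = d" using pa ne by auto
      then have "\<pi> = id" using 1 by (intro e) auto
      then show ?thesis by blast
    next
      case 2
      then have "\<pi> c = a" "\<pi> d = d" using pa ne by auto
      then have "\<pi> = sw c a" using 2 dist by (intro e) (auto simp: Transposition.transpose_def)
      then show ?thesis by blast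
    next
      case 3
      then have "\<pi> c = c" "\<pi> d = b" using pa ne by auto
      then have "\<pi> = sw d b" using 3 dist by (intro e) (auto simp: Transposition.transpose_def)
      then show ?thesis by blast
    next
      case 4
      then have "\<pi> c = a" "\<pi> d = b" using pa ne by auto
      then have "\<pi> = sw c a \<circ> sw d b" using 4 dist by (intro e) (auto simp: Transposition.transpose_def)
      then show ?thesis by blast
    qed
    then show "\<pi> \<in> {id, sw c a, sw d b, sw c a \<circ> sw d b}" by blast
  qed
  show "{id, sw c a, sw d b, sw c a \<circ> sw d b} \<subseteq> col_stab t"
  proof -
    have "snd (t (sw c a x)) = snd (t x)" for x
      using tc ta by (cases "x = c"; cases "x = a") auto
    moreover have "snd (t (sw d b x)) = snd (t x)" for x
      using td tb by (cases "x = d"; cases "x = b") auto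
    ultimately have "sw c a \<in> col_stab t" "sw d b \<in> col_stab t" "sw c a \<circ> sw d b \<in> col_stab t"
      by (simp_all add: col_stab_def permutes_swap_id permutes_compose)
    then show ?thesis using id_col_stab by auto
  qed
qed

lemma polytab: "polytabloid t = (\<lambda>r. (if r = d2 a b then 1 else 0) - (if r = d2 b c then 1 else 0)
     + (if r = d2 c d then 1 else 0) - (if r = d2 d a then 1 else 0))"
proof
  fix r
  have ne: "id \<noteq> sw c a" "id \<noteq> sw d b" "id \<noteq> sw c a \<circ> sw d b" "sw c a \<noteq> sw d b"
     "sw c a \<noteq> sw c a \<circ> sw d b" "sw d b \<noteq> sw c a \<circ> sw d b"
  proof -
    show "id \<noteq> sw c a" using dist by (metis id_apply transpose_apply_second)
    show "id \<noteq> sw d b" using dist by (metis id_apply transpose_apply_second)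
    show "id \<noteq> sw c a \<circ> sw d b" using dist by (metis comp_apply id_apply transpose_apply_other transpose_apply_second)
    show "sw c a \<noteq> sw d b" using dist by (metis transpose_apply_other transpose_apply_second)
    show "sw c a \<noteq> sw c a \<circ> sw d b" using dist by (metis comp_apply transpose_apply_other transpose_apply_second transpose_involutory)
    show "sw d b \<noteq> sw c a \<circ> sw d b" using dist by (metis comp_apply transpose_apply_other transpose_apply_second)
  qed
  have perm: "(sw c a \<circ> sw d b) permutes UNIV" by (simp add: permutes_compose permutes_swap_id)
  have "polytabloid t r = (\<Sum>\<pi>\<in>{id, sw c a, sw d b, sw c a \<circ> sw d b}.
      if d2 (\<pi> a) (\<pi> b) = r then real_of_int (sign \<pi>) else 0)"
  proof -
    have tp: "\<And>\<pi>. \<pi> \<in> col_stab t \<Longrightarrow> tabloid_of (t \<circ> inv \<pi>) = d2 (\<pi> a) (\<pi> b)"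
      using tabloid_pi col_stabD(1) by blast
    have "polytabloid t r = (\<Sum>\<pi>\<in>col_stab t. if d2 (\<pi> a) (\<pi> b) = r then real_of_int (sign \<pi>) else 0)"
      unfolding polytabloid_def by (rule sum.cong[OF refl]) (simp add: tp)
    then show ?thesis unfolding col_stab_eq .
  qed
  also have "\<dots> = (if r = d2 a b then 1 else 0) - (if r = d2 b c then 1 else 0)
     + (if r = d2 c d then 1 else 0) - (if r = d2 d a then 1 else 0)"
    using ne dist by (simp add: sign_compose permutation_swap_id sign_swap_id eq_commute[of "d2 _ _" r] d2_comm)
  finally show "polytabloid t r = \<dots>" .
qed

end


lemma exists4:
  assumes "CARD('n::finite) \<ge> 4"
  shows "\<exists>p q r s :: 'n. p \<noteq> q \<and> p \<noteq> r \<and> p \<noteq> s \<and> q \<noteq> r \<and> q \<noteq> s \<and> r \<noteq> s"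
proof -
  obtain xs :: "'n list" where xs: "set xs = UNIV" "distinct xs" using finite_distinct_list[of "UNIV :: 'n set"] by auto
  then have l: "length xs = CARD('n)" by (metis distinct_card)
  then have "length xs \<ge> 4" using assms by simp
  then have ne: "xs ! i \<noteq> xs ! j" if "i < 4" "j < 4" "i \<noteq> j" for i j
    using nth_eq_iff_index_eq[OF xs(2), of i j] that by auto
  then have "xs ! 0 \<noteq> xs ! 1 \<and> xs ! 0 \<noteq> xs ! 2 \<and> xs ! 0 \<noteq> xs ! 3 \<and> xs ! 1 \<noteq> xs ! 2 \<and> xs ! 1 \<noteq> xs ! 3 \<and> xs ! 2 \<noteq> xs ! 3"
    by simp
  then show ?thesis by blast
qed

lemma sum3_split:
  assumes "p \<noteq> q" "p \<noteq> y0" "q \<noteq> y0" "\<And>j. j \<notin> {p, q, y0} \<Longrightarrow> g j = 0"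
  shows "(\<Sum>j\<in>(UNIV::'n::finite set). (g j::real)) = g p + g q + g y0"
proof -
  have "(\<Sum>j\<in>(UNIV::'n set). g j) = (\<Sum>j\<in>UNIV. (if j = p then g p else 0) + (if j = q then g q else 0) + (if j = y0 then g y0 else 0))"
  proof (rule sum.cong[OF refl])
    fix j
    show "g j = (if j = p then g p else 0) + (if j = q then g q else 0) + (if j = y0 then g y0 else 0)"
      using assms by (cases "j = p"; cases "j = q"; cases "j = y0") auto
  qed
  also have "\<dots> = g p + g q + g y0" by (simp add: sum.distrib)
  finally show ?thesis .
qed

lemma W2_zero:
  assumes Z: "Z \<in> W2" and d: "p \<noteq> q" "p \<noteq> y0" "q \<noteq> y0"
  and z1: "\<And>i j. i \<notin> {p, q} \<Longrightarrow> j \<notin> {p, q} \<Longrightarrow> Z $ i $ j = 0"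
  and z2: "\<And>y. y \<notin> {p, q, y0} \<Longrightarrow> Z $ y $ p = 0"
  shows "Z = 0"
proof -
  note r = W2D(1)[OF Z] and s = W2D(2)[OF Z] and dg = W2D(3)[OF Z]
  have yq: "Z $ y $ q = - Z $ y $ p" if "y \<notin> {p, q}" for y
  proof -
    have "0 = (\<Sum>j\<in>UNIV. Z $ y $ j)" using r by simp
    also have "\<dots> = Z $ y $ p + Z $ y $ q + Z $ y $ y0"
      by (rule sum3_split[OF d]) (use that z1 in auto)
    also have "Z $ y $ y0 = 0" using that z1 d by (cases "y = y0") (auto simp: dg)
    finally show ?thesis by simp
  qed
  have yq0: "Z $ y $ q = 0" if "y \<notin> {p, q, y0}" for y using yq[of y] z2[OF that] that by simp
  have rp: "Z $ p $ q + Z $ p $ y0 = 0"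
  proof -
    have "0 = (\<Sum>j\<in>UNIV. Z $ p $ j)" using r by simp
    also have "\<dots> = Z $ p $ p + Z $ p $ q + Z $ p $ y0"
      by (rule sum3_split[OF d]) (metis s z2)
    finally show ?thesis using dg[of p] by simp
  qed
  have rq: "Z $ q $ p + Z $ q $ y0 = 0"
  proof -
    have "0 = (\<Sum>j\<in>UNIV. Z $ q $ j)" using r by simp
    also have "\<dots> = Z $ q $ p + Z $ q $ q + Z $ q $ y0"
      by (rule sum3_split[OF d]) (metis s yq0)
    finally show ?thesis using dg[of q] by simp
  qed
  have ry: "Z $ y0 $ p + Z $ y0 $ q = 0" using yq[of y0] d by simp
  have pq: "Z $ p $ q = 0" and py: "Z $ p $ y0 = 0" and qy: "Z $ q $ y0 = 0"
    using rp rq ry s[of y0 p] s[of y0 q] s[of q p] by linarith+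
  have "Z $ i $ j = 0" for i j
  proof (cases "i \<in> {p, q}")
    case False
    show ?thesis
    proof (cases "j \<in> {p, q}")
      case False then show ?thesis using \<open>i \<notin> {p, q}\<close> z1 by blast
    next
      case True
      then show ?thesis
      proof
        assume "j = p" then show ?thesis using False z2[of i] py s[of y0 p] by (cases "i = y0") auto
      next
        assume "j \<in> {q}" then have "j = q" by simp
        then show ?thesis using False yq0[of i] qy s[of y0 q] by (cases "i = y0") auto
      qed
    qed
  next
    case True
    show ?thesis
    proof (cases "j \<in> {p, q}")
      case True then show ?thesis using \<open>i \<in> {p, q}\<close> pq dg s[of q p] by auto
    next
      case False
      then show ?thesis using True z2[of j] yq0[of j] s[of i j] py qy by (cases "j = y0") auto
    qed
  qed
  then show ?thesis by (simp add: vec_eq_iff)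
qed



lemma specht_W2:
  assumes n4: "CARD('n::finite) \<ge> 4"
  shows "spechtIso (W2 :: (real^'n^'n) set) [CARD('n) - 2, 2]"
proof (rule spechtIso_gen[where f = f2 and G = "\<lambda>t. Q (tab_n2.a t) (tab_n2.b t) (tab_n2.c t) (tab_n2.d t)"])
  let ?G = "\<lambda>t. Q (tab_n2.a t) (tab_n2.b t) (tab_n2.c t) (tab_n2.d t)"
  let ?T = "tableaux [CARD('n) - 2, 2] :: ('n \<Rightarrow> nat \<times> nat) set"
  show "subspace (W2 :: (real^'n^'n) set)" by (rule W2_sub)
  show "conj_act \<sigma> X \<in> W2" if "\<sigma> permutes UNIV" "X \<in> W2" for \<sigma> :: "'n \<Rightarrow> 'n" and X :: "real^'n^'n"
    using W2_conj that by blast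
  show "f2 (X + Y) = (\<lambda>r. f2 X r + f2 Y r)" for X Y :: "real^'n^'n" by (rule f2_add)
  show "f2 (c *\<^sub>R X) = (\<lambda>r. c * f2 X r)" for c and X :: "real^'n^'n" by (rule f2_scal)
  show "X = 0" if "X \<in> W2" "f2 X = (\<lambda>r. 0)" for X :: "real^'n^'n" using f2_inj that by blast
  show "f2 (conj_act \<sigma> X) = tab_act \<sigma> (f2 X)" if "\<sigma> permutes UNIV" "X \<in> W2" for \<sigma> :: "'n \<Rightarrow> 'n" and X :: "real^'n^'n"
    using f2_eqv that by blast
  show "?G t \<in> (W2 :: (real^'n^'n) set)" if "t \<in> ?T" for t
  proof -
    interpret T: tab_n2 t using that n4 by unfold_locales
    show ?thesis using T.dist by (intro Q_W2) auto
  qed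
  show "f2 (?G t) = polytabloid t" if "t \<in> ?T" for t
  proof -
    interpret T: tab_n2 t using that n4 by unfold_locales
    have "T.a \<noteq> T.b" "T.b \<noteq> T.c" "T.c \<noteq> T.d" "T.d \<noteq> T.a" using T.dist by auto
    then show ?thesis by (simp add: f2_Q T.polytab)
  qed
  have Gspan: "Q x y u v \<in> span (?G ` ?T)"
    if ne: "x \<noteq> y" "x \<noteq> u" "x \<noteq> v" "y \<noteq> u" "y \<noteq> v" "u \<noteq> v" for x y u v
  proof -
    have c2: "1 < CARD('n) - 2" using n4 by simp
    have ex: "\<exists>t\<in>?T. map t [x, y, u, v] = [(1,0), (1,1), (0,0), (0,1)]"
      by (rule exists_tableau) (use ne c2 n4 in \<open>auto simp: card_cells2 cells2\<close>)
    then obtain t :: "'n \<Rightarrow> nat \<times> nat" where t: "t \<in> ?T" "map t [x, y, u, v] = [(1,0), (1,1), (0,0), (0,1)]"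
      by (rule bexE)
    interpret T: tab_n2 t using t n4 by unfold_locales
    have tx: "t x = (1,0)" "t y = (1,1)" "t u = (0,0)" "t v = (0,1)" using t(2) by auto
    have "T.a = x" "T.b = y" "T.c = u" "T.d = v" using T.ta T.tb T.tc T.td T.t_eq tx by metis+
    then show ?thesis using t(1) by (metis (mono_tags, lifting) imageI span_base)
  qed
  show "(W2 :: (real^'n^'n) set) \<subseteq> span (?G ` ?T)"
  proof
    fix X :: "real^'n^'n" assume X: "X \<in> W2"
    obtain p q y0 s0 :: 'n where d: "p \<noteq> q" "p \<noteq> y0" "p \<noteq> s0" "q \<noteq> y0" "q \<noteq> s0" "y0 \<noteq> s0"
      using exists4[OF n4] by blast
    define coef1 where "coef1 x y = (if x \<notin> {p, q} \<and> y \<notin> {p, q} \<and> x \<noteq> y then X $ x $ y / 2 else 0)" for x y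
    define S1 where "S1 = (\<Sum>x\<in>UNIV. \<Sum>y\<in>UNIV. coef1 x y *\<^sub>R Q x y p q)"
    have Q1: "Q x y p q \<in> W2" if "x \<notin> {p, q}" "y \<notin> {p, q}" "x \<noteq> y" for x y
      using that d by (intro Q_W2) auto
    have S1W: "S1 \<in> W2" unfolding S1_def
    proof (intro subspace_sum[OF W2_sub])
      fix x y show "coef1 x y *\<^sub>R Q x y p q \<in> W2"
        using Q1[of x y] by (cases "x \<notin> {p, q} \<and> y \<notin> {p, q} \<and> x \<noteq> y") (auto simp: coef1_def subspace_scale[OF W2_sub] subspace_0[OF W2_sub])
    qed
    define Y where "Y = X - S1"
    have YW: "Y \<in> W2" unfolding Y_def using subspace_diff[OF W2_sub X S1W] .
    have S1ij: "S1 $ i $ j = X $ i $ j" if "i \<notin> {p, q}" "j \<notin> {p, q}" "i \<noteq> j" for i j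
    proof -
      have "S1 $ i $ j = (\<Sum>x\<in>UNIV. \<Sum>y\<in>UNIV. (if x = i \<and> y = j then coef1 i j else 0) + (if x = j \<and> y = i then coef1 j i else 0))"
        unfolding S1_def sum_component
        apply (intro sum.cong refl)
        subgoal for x y using that by (cases "x = i"; cases "y = j"; cases "x = j"; cases "y = i") (simp_all add: Q_entry Sm_entry)
        done
      also have "\<dots> = coef1 i j + coef1 j i" by (simp add: sum.distrib sum2_delta')
      also have "\<dots> = X $ i $ j" using that W2D(2)[OF X, of j i] by (simp add: coef1_def)
      finally show ?thesis .
    qed
    have Yz: "Y $ i $ j = 0" if "i \<notin> {p, q}" "j \<notin> {p, q}" for i j
      using S1ij[OF that] W2D(3)[OF YW, of i] by (cases "i = j") (auto simp: Y_def)
    define coef2 where "coef2 y = (if y \<notin> {p, q, y0} then Y $ y $ p else 0)" for y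
    define S2 where "S2 = (\<Sum>y\<in>UNIV. coef2 y *\<^sub>R Q y p y0 q)"
    have S2W: "S2 \<in> W2" unfolding S2_def
    proof (intro subspace_sum[OF W2_sub])
      fix y show "coef2 y *\<^sub>R Q y p y0 q \<in> W2"
      proof (cases "y \<notin> {p, q, y0}")
        case True then have "Q y p y0 q \<in> W2" using d by (intro Q_W2) auto
        then show ?thesis by (rule subspace_scale[OF W2_sub])
      next
        case False then show ?thesis by (simp add: coef2_def subspace_0[OF W2_sub])
      qed
    qed
    define Z where "Z = Y - S2"
    have ZW: "Z \<in> W2" unfolding Z_def using subspace_diff[OF W2_sub YW S2W] .
    have S2z: "S2 $ i $ j = 0" if "i \<notin> {p, q}" "j \<notin> {p, q}" for i j
    proof -
      show ?thesis
        unfolding S2_def sum_component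
        by (rule sum.neutral) (use that in \<open>simp add: Q_entry Sm_entry\<close>)
    qed
    have S2p: "S2 $ y $ p = Y $ y $ p" if "y \<notin> {p, q, y0}" for y
    proof -
      have "S2 $ y $ p = (\<Sum>y'\<in>UNIV. if y' = y then coef2 y else 0)"
        unfolding S2_def sum_component
        apply (intro sum.cong refl)
        subgoal for y' using that d by (cases "y' = y") (simp_all add: Q_entry Sm_entry)
        done
      then show ?thesis using that by (simp add: coef2_def)
    qed
    have "Z = 0"
    proof (rule W2_zero[OF ZW d(1) d(2) d(4)])
      show "Z $ i $ j = 0" if "i \<notin> {p, q}" "j \<notin> {p, q}" for i j
        using Yz[OF that] S2z[OF that] by (simp add: Z_def)
      show "Z $ y $ p = 0" if "y \<notin> {p, q, y0}" for y
        using S2p[OF that] by (simp add: Z_def)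
    qed
    then have XS: "X = S1 + S2" unfolding Z_def Y_def by (simp add: algebra_simps)
    have "coef1 x y *\<^sub>R Q x y p q \<in> span (?G ` ?T)" for x y
    proof (cases "x \<notin> {p, q} \<and> y \<notin> {p, q} \<and> x \<noteq> y")
      case True then show ?thesis using d by (intro span_scale Gspan) auto
    next
      case False
      have "coef1 x y = 0" unfolding coef1_def using False by (rule if_not_P)
      then show ?thesis by (simp add: span_zero)
    qed
    then have "S1 \<in> span (?G ` ?T)" unfolding S1_def by (intro span_sum) auto
    moreover have "coef2 y *\<^sub>R Q y p y0 q \<in> span (?G ` ?T)" for y
    proof (cases "y \<notin> {p, q, y0}")
      case True then show ?thesis using d by (intro span_scale Gspan) auto
    next
      case False
      have "coef2 y = 0" unfolding coef2_def using False by (rule if_not_P)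
      then show ?thesis by (simp add: span_zero)
    qed
    then have "S2 \<in> span (?G ` ?T)" unfolding S2_def by (intro span_sum) auto
    ultimately show "X \<in> span (?G ` ?T)" unfolding XS by (rule span_add)
  qed
qed


definition E1 :: "('n::finite \<Rightarrow> real) \<Rightarrow> real^'n^'n" where
  "E1 u = (\<chi> i j. u j)"

definition S1m :: "('n::finite \<Rightarrow> real) \<Rightarrow> real^'n^'n" where
  "S1m u = (\<chi> i j. (if i = j then real CARD('n) * u i else 0) - u i - u j)"

definition WE1 :: "(real^'n::finite^'n) set" where
  "WE1 = {E1 u | u. sum u UNIV = 0}"

definition WS1 :: "(real^'n::finite^'n) set" where
  "WS1 = {S1m u | u. sum u UNIV = 0}"

lemma specht_E1:
  assumes n4: "CARD('n::finite) \<ge> 4"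
  shows "spechtIso (WE1 :: (real^'n^'n) set) [CARD('n) - 1, 1]"
  unfolding WE1_def
proof (rule specht_n1[where phi = "\<lambda>X j. (\<Sum>i\<in>UNIV. X $ i $ j) / real CARD('n)"])
  show "2 \<le> CARD('n)" using n4 by simp
  show "E1 (\<lambda>i. u i + v i) = E1 u + E1 v" for u v :: "'n \<Rightarrow> real" by (simp add: E1_def vec_eq_iff)
  show "E1 (\<lambda>i. c * u i) = c *\<^sub>R E1 u" for c and u :: "'n \<Rightarrow> real" by (simp add: E1_def vec_eq_iff)
  show "(\<lambda>j. (\<Sum>i\<in>UNIV. (X + Y) $ i $ j) / real CARD('n)) =
        (\<lambda>i. (\<Sum>ia\<in>UNIV. X $ ia $ i) / real CARD('n) + (\<Sum>ia\<in>UNIV. Y $ ia $ i) / real CARD('n))" for X Y :: "real^'n^'n"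
    by (simp add: sum.distrib add_divide_distrib)
  show "(\<lambda>j. (\<Sum>i\<in>UNIV. (c *\<^sub>R X) $ i $ j) / real CARD('n)) =
        (\<lambda>i. c * ((\<Sum>ia\<in>UNIV. X $ ia $ i) / real CARD('n)))" for c and X :: "real^'n^'n"
    by (simp add: sum_distrib_left)
  show "(\<lambda>j. (\<Sum>i\<in>UNIV. E1 u $ i $ j) / real CARD('n)) = u" if "sum u UNIV = 0" for u :: "'n \<Rightarrow> real"
    by (simp add: E1_def fun_eq_iff)
  show "conj_act \<sigma> (E1 u) = E1 (u \<circ> inv \<sigma>)" if "\<sigma> permutes UNIV" for \<sigma> :: "'n \<Rightarrow> 'n" and u
    by (simp add: vec_eq_iff conj_entry[OF that] E1_def)
qed

lemma specht_S1:
  assumes n4: "CARD('n::finite) \<ge> 4"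
  shows "spechtIso (WS1 :: (real^'n^'n) set) [CARD('n) - 1, 1]"
  unfolding WS1_def
proof (rule specht_n1[where phi = "\<lambda>X i. X $ i $ i / (real CARD('n) - 2)"])
  have nz: "real CARD('n) - 2 \<noteq> 0" using n4 by simp
  show "2 \<le> CARD('n)" using n4 by simp
  show "S1m (\<lambda>i. u i + v i) = S1m u + S1m v" for u v :: "'n \<Rightarrow> real" by (simp add: S1m_def vec_eq_iff algebra_simps)
  show "S1m (\<lambda>i. c * u i) = c *\<^sub>R S1m u" for c and u :: "'n \<Rightarrow> real" by (simp add: S1m_def vec_eq_iff algebra_simps)
  show "(\<lambda>i. (X + Y) $ i $ i / (real CARD('n) - 2)) =
        (\<lambda>i. X $ i $ i / (real CARD('n) - 2) + Y $ i $ i / (real CARD('n) - 2))" for X Y :: "real^'n^'n"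
    by (simp add: add_divide_distrib)
  show "(\<lambda>i. (c *\<^sub>R X) $ i $ i / (real CARD('n) - 2)) = (\<lambda>i. c * (X $ i $ i / (real CARD('n) - 2)))" for c and X :: "real^'n^'n"
    by simp
  show "(\<lambda>i. S1m u $ i $ i / (real CARD('n) - 2)) = u" if "sum u UNIV = 0" for u :: "'n \<Rightarrow> real"
    using nz by (simp add: S1m_def fun_eq_iff field_simps)
  show "conj_act \<sigma> (S1m u) = S1m (u \<circ> inv \<sigma>)" if "\<sigma> permutes UNIV" for \<sigma> :: "'n \<Rightarrow> 'n" and u
  proof -
    have "(inv \<sigma> i = inv \<sigma> j) = (i = j)" for i j using that by (metis permutes_inverses(1))
    then show ?thesis by (simp add: vec_eq_iff conj_entry[OF that] S1m_def)
  qed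
qed


lemma isoDecomp4:
  fixes V :: "(real^'n::finite^'n) set"
  assumes "subspace V" "spechtIso W0 l0" "spechtIso W1 l1" "spechtIso W2' l2" "spechtIso W3 l3"
  and eq: "\<And>X. X \<in> V \<longleftrightarrow> (\<exists>a b c d. a \<in> W0 \<and> b \<in> W1 \<and> c \<in> W2' \<and> d \<in> W3 \<and> X = a + b + c + d)"
  and un: "\<And>a b c d. a \<in> W0 \<Longrightarrow> b \<in> W1 \<Longrightarrow> c \<in> W2' \<Longrightarrow> d \<in> W3 \<Longrightarrow> a + b + c + d = 0 \<Longrightarrow> a = 0 \<and> b = 0 \<and> c = 0 \<and> d = 0"
  shows "isoDecomp V [l0, l1, l2, l3]"
  unfolding isoDecomp_def
proof (intro conjI exI[of _ "[W0, W1, W2', W3]"])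
  let ?Ws = "[W0, W1, W2', W3]"
  show "subspace V" by fact
  show "length ?Ws = length [l0, l1, l2, l3]" by simp
  show "\<forall>i<length [l0, l1, l2, l3]. spechtIso (?Ws ! i) ([l0, l1, l2, l3] ! i)"
    using assms by (auto simp: less_Suc_eq)
  show "V = {\<Sum>i<length [l0, l1, l2, l3]. vs i |vs. \<forall>i<length [l0, l1, l2, l3]. vs i \<in> ?Ws ! i}"
  proof (rule set_eqI)
    fix X
    show "X \<in> V \<longleftrightarrow> X \<in> {\<Sum>i<length [l0, l1, l2, l3]. vs i |vs. \<forall>i<length [l0, l1, l2, l3]. vs i \<in> ?Ws ! i}"
    proof
      assume "X \<in> V"
      then obtain a b c d where abcd: "a \<in> W0" "b \<in> W1" "c \<in> W2'" "d \<in> W3" "X = a + b + c + d" using eq by blast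
      show "X \<in> {\<Sum>i<length [l0, l1, l2, l3]. vs i |vs. \<forall>i<length [l0, l1, l2, l3]. vs i \<in> ?Ws ! i}"
        apply (rule CollectI, rule exI[of _ "\<lambda>i. [a, b, c, d] ! i"])
        using abcd by (auto simp: less_Suc_eq add.assoc)
    next
      assume "X \<in> {\<Sum>i<length [l0, l1, l2, l3]. vs i |vs. \<forall>i<length [l0, l1, l2, l3]. vs i \<in> ?Ws ! i}"
      then obtain vs where vs: "X = (\<Sum>i<length [l0, l1, l2, l3]. vs i)" "\<forall>i<length [l0, l1, l2, l3]. vs i \<in> ?Ws ! i" by blast
      have m0: "vs (0) \<in> W0" using vs(2)[rule_format, of "0"] by simp
      have m1: "vs (Suc 0) \<in> W1" using vs(2)[rule_format, of "Suc 0"] by simp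
      have m2: "vs (Suc (Suc 0)) \<in> W2'" using vs(2)[rule_format, of "Suc (Suc 0)"] by simp
      have m3: "vs (Suc (Suc (Suc 0))) \<in> W3" using vs(2)[rule_format, of "Suc (Suc (Suc 0))"] by simp
      have xe: "X = vs (0) + vs (Suc 0) + vs (Suc (Suc 0)) + vs (Suc (Suc (Suc 0)))" using vs(1) by (simp add: add.assoc)
      show "X \<in> V" unfolding eq by (rule exI[of _ "vs (0)"], rule exI[of _ "vs (Suc 0)"], rule exI[of _ "vs (Suc (Suc 0))"], rule exI[of _ "vs (Suc (Suc (Suc 0)))"]) (use m0 m1 m2 m3 xe in blast)
    qed
  qed
  show "\<forall>vs. (\<forall>i<length [l0, l1, l2, l3]. vs i \<in> ?Ws ! i) \<and> (\<Sum>i<length [l0, l1, l2, l3]. vs i) = 0 \<longrightarrow>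
        (\<forall>i<length [l0, l1, l2, l3]. vs i = 0)"
  proof (rule allI, rule impI)
    fix vs :: "nat \<Rightarrow> real^'n^'n"
    assume h: "(\<forall>i<length [l0, l1, l2, l3]. vs i \<in> ?Ws ! i) \<and> (\<Sum>i<length [l0, l1, l2, l3]. vs i) = 0"
    have m0: "vs (0) \<in> W0" using h[THEN conjunct1, rule_format, of "0"] by simp
    have m1: "vs (Suc 0) \<in> W1" using h[THEN conjunct1, rule_format, of "Suc 0"] by simp
    have m2: "vs (Suc (Suc 0)) \<in> W2'" using h[THEN conjunct1, rule_format, of "Suc (Suc 0)"] by simp
    have m3: "vs (Suc (Suc (Suc 0))) \<in> W3" using h[THEN conjunct1, rule_format, of "Suc (Suc (Suc 0))"] by simp
    have "vs (0) + vs (Suc 0) + vs (Suc (Suc 0)) + vs (Suc (Suc (Suc 0))) = 0" using h by (simp add: add.assoc)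
    then have "vs (0) = 0 \<and> vs (Suc 0) = 0 \<and> vs (Suc (Suc 0)) = 0 \<and> vs (Suc (Suc (Suc 0))) = 0" by (rule un[OF m0 m1 m2 m3])
    then show "\<forall>i<length [l0, l1, l2, l3]. vs i = 0" by (auto simp: less_Suc_eq)
  qed
qed

lemma isoDecomp3:
  fixes V :: "(real^'n::finite^'n) set"
  assumes "subspace V" "spechtIso W0 l0" "spechtIso W1 l1" "spechtIso W2' l2"
  and eq: "\<And>X. X \<in> V \<longleftrightarrow> (\<exists>a b c. a \<in> W0 \<and> b \<in> W1 \<and> c \<in> W2' \<and> X = a + b + c)"
  and un: "\<And>a b c. a \<in> W0 \<Longrightarrow> b \<in> W1 \<Longrightarrow> c \<in> W2' \<Longrightarrow> a + b + c = 0 \<Longrightarrow> a = 0 \<and> b = 0 \<and> c = 0"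
  shows "isoDecomp V [l0, l1, l2]"
  unfolding isoDecomp_def
proof (intro conjI exI[of _ "[W0, W1, W2']"])
  let ?Ws = "[W0, W1, W2']"
  show "subspace V" by fact
  show "length ?Ws = length [l0, l1, l2]" by simp
  show "\<forall>i<length [l0, l1, l2]. spechtIso (?Ws ! i) ([l0, l1, l2] ! i)"
    using assms by (auto simp: less_Suc_eq)
  show "V = {\<Sum>i<length [l0, l1, l2]. vs i |vs. \<forall>i<length [l0, l1, l2]. vs i \<in> ?Ws ! i}"
  proof (rule set_eqI)
    fix X
    show "X \<in> V \<longleftrightarrow> X \<in> {\<Sum>i<length [l0, l1, l2]. vs i |vs. \<forall>i<length [l0, l1, l2]. vs i \<in> ?Ws ! i}"
    proof
      assume "X \<in> V"
      then obtain a b c where abcd: "a \<in> W0" "b \<in> W1" "c \<in> W2'" "X = a + b + c" using eq by blast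
      show "X \<in> {\<Sum>i<length [l0, l1, l2]. vs i |vs. \<forall>i<length [l0, l1, l2]. vs i \<in> ?Ws ! i}"
        apply (rule CollectI, rule exI[of _ "\<lambda>i. [a, b, c] ! i"])
        using abcd by (auto simp: less_Suc_eq add.assoc)
    next
      assume "X \<in> {\<Sum>i<length [l0, l1, l2]. vs i |vs. \<forall>i<length [l0, l1, l2]. vs i \<in> ?Ws ! i}"
      then obtain vs where vs: "X = (\<Sum>i<length [l0, l1, l2]. vs i)" "\<forall>i<length [l0, l1, l2]. vs i \<in> ?Ws ! i" by blast
      have m0: "vs (0) \<in> W0" using vs(2)[rule_format, of "0"] by simp
      have m1: "vs (Suc 0) \<in> W1" using vs(2)[rule_format, of "Suc 0"] by simp
      have m2: "vs (Suc (Suc 0)) \<in> W2'" using vs(2)[rule_format, of "Suc (Suc 0)"] by simp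
      have xe: "X = vs (0) + vs (Suc 0) + vs (Suc (Suc 0))" using vs(1) by (simp add: add.assoc)
      show "X \<in> V" unfolding eq by (rule exI[of _ "vs (0)"], rule exI[of _ "vs (Suc 0)"], rule exI[of _ "vs (Suc (Suc 0))"]) (use m0 m1 m2 xe in blast)
    qed
  qed
  show "\<forall>vs. (\<forall>i<length [l0, l1, l2]. vs i \<in> ?Ws ! i) \<and> (\<Sum>i<length [l0, l1, l2]. vs i) = 0 \<longrightarrow>
        (\<forall>i<length [l0, l1, l2]. vs i = 0)"
  proof (rule allI, rule impI)
    fix vs :: "nat \<Rightarrow> real^'n^'n"
    assume h: "(\<forall>i<length [l0, l1, l2]. vs i \<in> ?Ws ! i) \<and> (\<Sum>i<length [l0, l1, l2]. vs i) = 0"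
    have m0: "vs (0) \<in> W0" using h[THEN conjunct1, rule_format, of "0"] by simp
    have m1: "vs (Suc 0) \<in> W1" using h[THEN conjunct1, rule_format, of "Suc 0"] by simp
    have m2: "vs (Suc (Suc 0)) \<in> W2'" using h[THEN conjunct1, rule_format, of "Suc (Suc 0)"] by simp
    have "vs (0) + vs (Suc 0) + vs (Suc (Suc 0)) = 0" using h by (simp add: add.assoc)
    then have "vs (0) = 0 \<and> vs (Suc 0) = 0 \<and> vs (Suc (Suc 0)) = 0" by (rule un[OF m0 m1 m2])
    then show "\<forall>i<length [l0, l1, l2]. vs i = 0" by (auto simp: less_Suc_eq)
  qed
qed

lemma isoDecomp2:
  fixes V :: "(real^'n::finite^'n) set"
  assumes "subspace V" "spechtIso W0 l0" "spechtIso W1 l1"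
  and eq: "\<And>X. X \<in> V \<longleftrightarrow> (\<exists>a b. a \<in> W0 \<and> b \<in> W1 \<and> X = a + b)"
  and un: "\<And>a b. a \<in> W0 \<Longrightarrow> b \<in> W1 \<Longrightarrow> a + b = 0 \<Longrightarrow> a = 0 \<and> b = 0"
  shows "isoDecomp V [l0, l1]"
  unfolding isoDecomp_def
proof (intro conjI exI[of _ "[W0, W1]"])
  let ?Ws = "[W0, W1]"
  show "subspace V" by fact
  show "length ?Ws = length [l0, l1]" by simp
  show "\<forall>i<length [l0, l1]. spechtIso (?Ws ! i) ([l0, l1] ! i)"
    using assms by (auto simp: less_Suc_eq)
  show "V = {\<Sum>i<length [l0, l1]. vs i |vs. \<forall>i<length [l0, l1]. vs i \<in> ?Ws ! i}"
  proof (rule set_eqI)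
    fix X
    show "X \<in> V \<longleftrightarrow> X \<in> {\<Sum>i<length [l0, l1]. vs i |vs. \<forall>i<length [l0, l1]. vs i \<in> ?Ws ! i}"
    proof
      assume "X \<in> V"
      then obtain a b where abcd: "a \<in> W0" "b \<in> W1" "X = a + b" using eq by blast
      show "X \<in> {\<Sum>i<length [l0, l1]. vs i |vs. \<forall>i<length [l0, l1]. vs i \<in> ?Ws ! i}"
        apply (rule CollectI, rule exI[of _ "\<lambda>i. [a, b] ! i"])
        using abcd by (auto simp: less_Suc_eq add.assoc)
    next
      assume "X \<in> {\<Sum>i<length [l0, l1]. vs i |vs. \<forall>i<length [l0, l1]. vs i \<in> ?Ws ! i}"
      then obtain vs where vs: "X = (\<Sum>i<length [l0, l1]. vs i)" "\<forall>i<length [l0, l1]. vs i \<in> ?Ws ! i" by blast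
      have m0: "vs (0) \<in> W0" using vs(2)[rule_format, of "0"] by simp
      have m1: "vs (Suc 0) \<in> W1" using vs(2)[rule_format, of "Suc 0"] by simp
      have xe: "X = vs (0) + vs (Suc 0)" using vs(1) by (simp add: add.assoc)
      show "X \<in> V" unfolding eq by (rule exI[of _ "vs (0)"], rule exI[of _ "vs (Suc 0)"]) (use m0 m1 xe in blast)
    qed
  qed
  show "\<forall>vs. (\<forall>i<length [l0, l1]. vs i \<in> ?Ws ! i) \<and> (\<Sum>i<length [l0, l1]. vs i) = 0 \<longrightarrow>
        (\<forall>i<length [l0, l1]. vs i = 0)"
  proof (rule allI, rule impI)
    fix vs :: "nat \<Rightarrow> real^'n^'n"
    assume h: "(\<forall>i<length [l0, l1]. vs i \<in> ?Ws ! i) \<and> (\<Sum>i<length [l0, l1]. vs i) = 0"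
    have m0: "vs (0) \<in> W0" using h[THEN conjunct1, rule_format, of "0"] by simp
    have m1: "vs (Suc 0) \<in> W1" using h[THEN conjunct1, rule_format, of "Suc 0"] by simp
    have "vs (0) + vs (Suc 0) = 0" using h by (simp add: add.assoc)
    then have "vs (0) = 0 \<and> vs (Suc 0) = 0" by (rule un[OF m0 m1])
    then show "\<forall>i<length [l0, l1]. vs i = 0" by (auto simp: less_Suc_eq)
  qed
qed

lemma isoDecomp1:
  fixes V :: "(real^'n::finite^'n) set"
  assumes "spechtIso V l0"
  shows "isoDecomp V [l0]"
  unfolding isoDecomp_def
proof (intro conjI exI[of _ "[V]"])
  show "subspace V" using assms by (simp add: spechtIso_def)
  show "length [V] = length [l0]" by simp
  show "\<forall>i<length [l0]. spechtIso ([V] ! i) ([l0] ! i)" using assms by simp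
  show "V = {\<Sum>i<length [l0]. vs i |vs. \<forall>i<length [l0]. vs i \<in> [V] ! i}"
  proof (rule set_eqI)
    fix X
    show "X \<in> V \<longleftrightarrow> X \<in> {\<Sum>i<length [l0]. vs i |vs. \<forall>i<length [l0]. vs i \<in> [V] ! i}"
    proof
      assume "X \<in> V"
      then show "X \<in> {\<Sum>i<length [l0]. vs i |vs. \<forall>i<length [l0]. vs i \<in> [V] ! i}"
        by (intro CollectI exI[of _ "\<lambda>i. X"]) auto
    next
      assume "X \<in> {\<Sum>i<length [l0]. vs i |vs. \<forall>i<length [l0]. vs i \<in> [V] ! i}"
      then show "X \<in> V" by auto
    qed
  qed
  show "\<forall>vs. (\<forall>i<length [l0]. vs i \<in> [V] ! i) \<and> (\<Sum>i<length [l0]. vs i) = 0 \<longrightarrow> (\<forall>i<length [l0]. vs i = 0)"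
    by auto
qed


abbreviation "NN \<equiv> real CARD('n::finite)"

lemma Jn_entry: "(Jn::real^'n::finite^'n) $ i $ j = (if i = j then 1 - real CARD('n) else 1)"
  by (simp add: Jn_def)
lemma E1_entry: "E1 u $ i $ j = u j" by (simp add: E1_def)
lemma S1m_entry: "(S1m u :: real^'n::finite^'n) $ i $ j = (if i = j then real CARD('n) * u i else 0) - u i - u j"
  by (simp add: S1m_def)

lemma SymmD:
  assumes "X \<in> Symm"
  shows "(\<Sum>j\<in>UNIV. X $ i $ j) = 0" "X $ i $ j = X $ j $ i"
  using assms unfolding Symm_iff by blast+

lemma Symm_sub: "subspace Symm"
  unfolding subspace_def
proof (intro conjI ballI allI)
  show "0 \<in> Symm" by (simp add: Symm_iff)
  fix X Y :: "real^'n^'n" assume a: "X \<in> Symm" "Y \<in> Symm"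
  have "(\<Sum>j\<in>UNIV. (X + Y) $ i $ j) = 0" for i using SymmD(1)[OF a(1)] SymmD(1)[OF a(2)] by (simp add: sum.distrib)
  moreover have "(X + Y) $ i $ j = (X + Y) $ j $ i" for i j using SymmD(2)[OF a(1), of i j] SymmD(2)[OF a(2), of i j] by simp
  ultimately show "X + Y \<in> Symm" unfolding Symm_iff by blast
next
  fix c :: real and X :: "real^'n^'n" assume a: "X \<in> Symm"
  have "(\<Sum>j\<in>UNIV. (c *\<^sub>R X) $ i $ j) = 0" for i using SymmD(1)[OF a] by (simp add: sum_distrib_left[symmetric])
  moreover have "(c *\<^sub>R X) $ i $ j = (c *\<^sub>R X) $ j $ i" for i j using SymmD(2)[OF a, of i j] by simp
  ultimately show "c *\<^sub>R X \<in> Symm" unfolding Symm_iff by blast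
qed

lemma DS_sub: "subspace DS"
  unfolding subspace_def
proof (intro conjI ballI allI)
  show "0 \<in> DS" by (simp add: DS_iff)
  fix X Y :: "real^'n^'n" assume "X \<in> DS" "Y \<in> DS"
  then show "X + Y \<in> DS" by (simp add: DS_iff sum.distrib)
next
  fix c :: real and X :: "real^'n^'n" assume "X \<in> DS"
  then show "c *\<^sub>R X \<in> DS" by (simp add: DS_iff sum_distrib_left[symmetric])
qed

lemma Symm_DS: "X \<in> Symm \<Longrightarrow> X \<in> DS" by (simp add: Symm_def)
lemma Anti_DS: "X \<in> Anti \<Longrightarrow> X \<in> DS" by (simp add: Anti_def)
lemma W2_Symm: "X \<in> W2 \<Longrightarrow> X \<in> Symm" by (simp add: W2_def)

lemma Jn_Symm: "(Jn :: real^'n::finite^'n) \<in> Symm"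
proof -
  have "(\<Sum>j\<in>UNIV. (Jn::real^'n^'n) $ i $ j) = 0" for i
  proof -
    have "(\<Sum>j\<in>UNIV. (Jn::real^'n^'n) $ i $ j) = (\<Sum>j\<in>UNIV. 1 + (if j = i then - real CARD('n) else 0))"
      by (rule sum.cong) (auto simp: Jn_entry)
    also have "\<dots> = 0" by (simp add: sum.distrib)
    finally show ?thesis .
  qed
  moreover have "(Jn::real^'n^'n) $ i $ j = Jn $ j $ i" for i j by (simp add: Jn_entry eq_commute)
  ultimately show ?thesis unfolding Symm_iff by blast
qed

lemma S1m_Symm:
  assumes "sum u UNIV = 0"
  shows "(S1m u :: real^'n::finite^'n) \<in> Symm"
proof -
  have "(\<Sum>j\<in>UNIV. (S1m u :: real^'n^'n) $ i $ j) = 0" for i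
  proof -
    have "(\<Sum>j\<in>UNIV. (S1m u :: real^'n^'n) $ i $ j) = (\<Sum>j\<in>UNIV. (if j = i then real CARD('n) * u i else 0) - u i - u j)"
      by (rule sum.cong) (auto simp: S1m_entry)
    also have "\<dots> = 0" using assms by (simp add: sum_subtractf)
    finally show ?thesis .
  qed
  moreover have "(S1m u :: real^'n^'n) $ i $ j = S1m u $ j $ i" for i j by (simp add: S1m_entry eq_commute)
  ultimately show ?thesis unfolding Symm_iff by blast
qed

lemma trJn: "(\<Sum>i\<in>UNIV. (Jn::real^'n::finite^'n) $ i $ i) = real CARD('n) - real CARD('n) * real CARD('n)"
  by (simp add: Jn_entry algebra_simps)

lemma Symm_char:
  assumes n4: "CARD('n::finite) \<ge> 4" and X: "(X :: real^'n^'n) \<in> Symm"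
  shows "\<exists>k u Z. sum u UNIV = 0 \<and> Z \<in> W2 \<and> X = k *\<^sub>R Jn + S1m u + Z"
proof -
  let ?N = "real CARD('n)"
  have nz: "?N - ?N * ?N \<noteq> 0" by (rule card_ge2[OF n4])
  have n2: "?N - 2 \<noteq> 0" using n4 by simp
  define k where "k = (\<Sum>i\<in>UNIV. X $ i $ i) / (?N - ?N * ?N)"
  define u where "u i = (X $ i $ i - k * (1 - ?N)) / (?N - 2)" for i
  define Z where "Z = X - k *\<^sub>R Jn - S1m u"
  have su: "sum u UNIV = 0"
  proof -
    have "sum u UNIV = (\<Sum>i\<in>UNIV. X $ i $ i - k * (1 - ?N)) / (?N - 2)"
      unfolding u_def by (simp add: sum_divide_distrib)
    also have "(\<Sum>i\<in>UNIV. X $ i $ i - k * (1 - ?N)) = (\<Sum>i\<in>UNIV. X $ i $ i) - ?N * (k * (1 - ?N))"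
      by (simp add: sum_subtractf)
    also have "\<dots> = (\<Sum>i\<in>UNIV. X $ i $ i) - k * (?N - ?N * ?N)" by (simp add: algebra_simps)
    also have "\<dots> = 0" using nz by (simp add: k_def)
    finally show ?thesis by simp
  qed
  have ZS: "Z \<in> Symm" unfolding Z_def
    by (intro subspace_diff[OF Symm_sub] X subspace_scale[OF Symm_sub] Jn_Symm S1m_Symm su)
  have "Z $ i $ i = 0" for i
  proof -
    have "Z $ i $ i = X $ i $ i - k * (1 - ?N) - (?N - 2) * u i"
      by (simp add: Z_def Jn_entry S1m_entry algebra_simps)
    also have "\<dots> = 0" using n2 by (simp add: u_def)
    finally show ?thesis .
  qed
  then have "Z \<in> W2" using ZS by (simp add: W2_def)
  moreover have "X = k *\<^sub>R Jn + S1m u + Z" by (simp add: Z_def)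
  ultimately show ?thesis using su by blast
qed

lemma Symm_uniq:
  assumes n4: "CARD('n::finite) \<ge> 4" and su: "sum u UNIV = 0" and Z: "Z \<in> W2"
  and eq: "k *\<^sub>R (Jn::real^'n^'n) + S1m u + Z = 0"
  shows "k = 0 \<and> u = (\<lambda>i. 0) \<and> Z = 0"
proof -
  let ?N = "real CARD('n)"
  have nz: "?N - ?N * ?N \<noteq> 0" by (rule card_ge2[OF n4])
  have n2: "?N - 2 \<noteq> 0" using n4 by simp
  have d: "k * (1 - ?N) + (?N - 2) * u i = 0" for i
  proof -
    have "(k *\<^sub>R (Jn::real^'n^'n) + S1m u + Z) $ i $ i = 0" using eq by simp
    then show ?thesis using W2D(3)[OF Z, of i] by (simp add: Jn_entry S1m_entry algebra_simps)
  qed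
  have "(\<Sum>i\<in>(UNIV::'n set). k * (1 - ?N) + (?N - 2) * u i) = 0" using d by simp
  moreover have "(\<Sum>i\<in>(UNIV::'n set). k * (1 - ?N) + (?N - 2) * u i) = ?N * (k * (1 - ?N)) + (?N - 2) * sum u UNIV"
    by (simp add: sum.distrib sum_distrib_left)
  ultimately have "?N * (k * (1 - ?N)) = 0" using su by simp
  then have "k * (?N - ?N * ?N) = 0" by (simp add: algebra_simps)
  then have k0: "k = 0" using nz by simp
  then have u0: "u = (\<lambda>i. 0)" using d n2 by (auto simp: fun_eq_iff)
  have "S1m (\<lambda>i. 0) = (0::real^'n^'n)" by (simp add: S1m_def vec_eq_iff)
  then have "Z = 0" using eq k0 u0 by simp
  with k0 u0 show ?thesis by blast
qed


definition EIm :: "('n::finite \<Rightarrow> real) \<Rightarrow> real^'n^'n" where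
  "EIm v = (\<chi> i j. v j - (if i = j then sum v UNIV else 0))"

lemma EIm_entry: "EIm v $ i $ j = v j - (if i = j then sum v UNIV else 0)"
  by (simp add: EIm_def)

lemma Rmat_EIm: "Rmat i = EIm (\<lambda>k. if k = i then 1 else 0)"
proof -
  have "Rmat i $ a $ b = EIm (\<lambda>k. if k = i then 1 else 0) $ a $ b" for a b
  proof (cases "a = b")
    case True
    then show ?thesis by (simp add: Rmat_def EIm_entry)
  next
    case False then show ?thesis by (simp add: Rmat_def EIm_entry)
  qed
  then show ?thesis by (simp add: vec_eq_iff)
qed

lemma EIm_add: "EIm (\<lambda>k. v k + w k) = EIm v + EIm w"
  by (simp add: vec_eq_iff EIm_entry sum.distrib)
lemma EIm_scal: "EIm (\<lambda>k. c * v k) = c *\<^sub>R EIm v"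
  by (simp add: vec_eq_iff EIm_entry sum_distrib_left algebra_simps)

lemma EI_eq: "(EI :: (real^'n::finite^'n) set) = range EIm"
proof
  have sub: "subspace (range (EIm :: ('n \<Rightarrow> real) \<Rightarrow> real^'n^'n))"
    unfolding subspace_def
  proof (intro conjI ballI allI)
    have "(0::real^'n^'n) = EIm (\<lambda>k. 0)" by (simp add: vec_eq_iff EIm_entry)
    then show "(0::real^'n^'n) \<in> range EIm" by (rule ssubst) (rule rangeI)
    fix x y :: "real^'n^'n" assume "x \<in> range EIm" "y \<in> range EIm"
    then obtain v w where "x = EIm v" "y = EIm w" by blast
    then have "x + y = EIm (\<lambda>k. v k + w k)" by (simp add: EIm_add)
    then show "x + y \<in> range EIm" by (rule ssubst) (rule rangeI)
  next
    fix c :: real and x :: "real^'n^'n" assume "x \<in> range EIm"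
    then obtain v where "x = EIm v" by blast
    then have "c *\<^sub>R x = EIm (\<lambda>k. c * v k)" by (simp add: EIm_scal)
    then show "c *\<^sub>R x \<in> range EIm" by (rule ssubst) (rule rangeI)
  qed
  show "(EI :: (real^'n^'n) set) \<subseteq> range EIm"
    unfolding EI_def by (rule span_minimal[OF _ sub]) (auto simp: Rmat_EIm)
  show "range EIm \<subseteq> (EI :: (real^'n^'n) set)"
  proof
    fix X :: "real^'n^'n" assume "X \<in> range EIm"
    then obtain v where v: "X = EIm v" by blast
    have "EIm v = (\<Sum>i\<in>UNIV. v i *\<^sub>R Rmat i)"
    proof -
      have "EIm v $ a $ b = (\<Sum>i\<in>UNIV. v i *\<^sub>R Rmat i) $ a $ b" for a b
      proof -
        have "(\<Sum>i\<in>UNIV. v i *\<^sub>R Rmat i) $ a $ b = (\<Sum>i\<in>UNIV. (if b = i then v i else 0) - (if a = b then v i else 0))"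
          unfolding sum_component Rmat_EIm by (intro sum.cong refl) (simp add: EIm_entry algebra_simps)
        also have "\<dots> = v b - (if a = b then sum v UNIV else 0)" by (simp add: sum_subtractf)
        finally show ?thesis by (simp add: EIm_entry)
      qed
      then show ?thesis by (simp add: vec_eq_iff)
    qed
    also have "\<dots> \<in> EI" unfolding EI_def
      by (intro span_sum span_scale span_base) auto
    finally show "X \<in> EI" using v by simp
  qed
qed

lemma EI_sub: "subspace (EI :: (real^'n::finite^'n) set)"
  unfolding EI_def by (rule subspace_span)

lemma EI_char:
  assumes n4: "CARD('n::finite) \<ge> 4"
  shows "(X :: real^'n^'n) \<in> EI \<longleftrightarrow> (\<exists>c u. sum u UNIV = 0 \<and> X = c *\<^sub>R Jn + E1 u)"
proof
  let ?N = "real CARD('n)"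
  have N0: "?N \<noteq> 0" by simp
  assume "X \<in> EI"
  then obtain v where v: "X = EIm v" by (auto simp: EI_eq)
  define m where "m = sum v UNIV / ?N"
  define u where "u j = v j - m" for j
  have su: "sum u UNIV = 0" unfolding u_def m_def using N0 by (simp add: sum_subtractf)
  have "X = m *\<^sub>R Jn + E1 u"
  proof -
    have "X $ i $ j = (m *\<^sub>R Jn + E1 u) $ i $ j" for i j
      unfolding v using N0 by (simp add: EIm_entry Jn_entry E1_entry u_def m_def field_simps)
    then show ?thesis by (simp add: vec_eq_iff)
  qed
  with su show "\<exists>c u. sum u UNIV = 0 \<and> X = c *\<^sub>R Jn + E1 u" by blast
next
  assume "\<exists>c u. sum u UNIV = 0 \<and> X = c *\<^sub>R Jn + E1 u"
  then obtain c u where cu: "sum u UNIV = 0" "X = c *\<^sub>R Jn + E1 u" by blast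
  have "X = EIm (\<lambda>j. u j + c)"
  proof -
    have "X $ i $ j = EIm (\<lambda>j. u j + c) $ i $ j" for i j
      using cu by (simp add: EIm_entry Jn_entry E1_entry sum.distrib algebra_simps)
    then show ?thesis by (simp add: vec_eq_iff)
  qed
  then show "X \<in> EI" by (simp add: EI_eq)
qed

lemma exists_other:
  assumes "CARD('n::finite) \<ge> 2"
  shows "\<exists>i::'n. i \<noteq> j"
proof (rule ccontr)
  assume "\<not> (\<exists>i::'n. i \<noteq> j)"
  then have "(UNIV :: 'n set) = {j}" by auto
  then show False using assms by (metis card.empty card_insert_disjoint empty_iff finite.emptyI numeral_le_one_iff semiring_norm(69) One_nat_def)
qed

lemma EI_uniq:
  assumes n4: "CARD('n::finite) \<ge> 4" and su: "sum u UNIV = 0"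
  and eq: "c *\<^sub>R (Jn::real^'n^'n) + E1 u = 0"
  shows "c = 0 \<and> u = (\<lambda>i. 0)"
proof -
  have uj: "u j = - c" for j
  proof -
    obtain i :: 'n where "i \<noteq> j" using exists_other[of j] n4 by auto
    moreover have "(c *\<^sub>R (Jn::real^'n^'n) + E1 u) $ i $ j = 0" using eq by simp
    ultimately show ?thesis by (simp add: Jn_entry E1_entry)
  qed
  then have "sum u UNIV = - (real CARD('n) * c)" by simp
  then have c0: "c = 0" using su by simp
  then show ?thesis using uj by auto
qed

lemma E1_WE1_EI: "sum u UNIV = 0 \<Longrightarrow> (E1 u :: real^'n::finite^'n) = EIm u"
  by (simp add: vec_eq_iff E1_entry EIm_entry)


lemma S1m_zero: "S1m (\<lambda>i. 0) = (0::real^'n::finite^'n)" by (simp add: S1m_def vec_eq_iff)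
lemma E1_zero: "E1 (\<lambda>i. 0) = (0::real^'n::finite^'n)" by (simp add: E1_def vec_eq_iff)

lemma iso_EI:
  assumes n4: "CARD('n::finite) \<ge> 4"
  shows "isoDecomp (EI :: (real^'n^'n) set) [[CARD('n)], [CARD('n) - 1, 1]]"
proof (rule isoDecomp2[OF EI_sub specht_n[OF n4] specht_E1[OF n4]])
  show "X \<in> EI \<longleftrightarrow> (\<exists>a b. a \<in> Wn \<and> b \<in> WE1 \<and> X = a + b)" for X :: "real^'n^'n"
    unfolding EI_char[OF n4] Wn_def WE1_def by blast
  show "a = 0 \<and> b = 0" if h: "a \<in> (Wn :: (real^'n^'n) set)" "b \<in> WE1" "a + b = 0" for a b
  proof -
    obtain c u where cu: "a = c *\<^sub>R Jn" "b = E1 u" "sum u UNIV = 0" using h(1,2) unfolding Wn_def WE1_def by blast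
    then have "c = 0 \<and> u = (\<lambda>i. 0)" using EI_uniq[OF n4 cu(3)] h(3) by simp
    then show ?thesis using cu E1_zero by simp
  qed
qed

lemma Symm_eq:
  assumes n4: "CARD('n::finite) \<ge> 4"
  shows "(X :: real^'n^'n) \<in> Symm \<longleftrightarrow> (\<exists>a b c. a \<in> Wn \<and> b \<in> WS1 \<and> c \<in> W2 \<and> X = a + b + c)"
proof
  assume "X \<in> Symm"
  then obtain k u Z where "sum u UNIV = 0" "Z \<in> W2" "X = k *\<^sub>R Jn + S1m u + Z" using Symm_char[OF n4] by blast
  then show "\<exists>a b c. a \<in> Wn \<and> b \<in> WS1 \<and> c \<in> W2 \<and> X = a + b + c" unfolding Wn_def WS1_def by blast
next
  assume "\<exists>a b c. a \<in> Wn \<and> b \<in> WS1 \<and> c \<in> W2 \<and> X = a + b + c"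
  then obtain k u Z where "sum u UNIV = 0" "Z \<in> W2" "X = k *\<^sub>R Jn + S1m u + Z" unfolding Wn_def WS1_def by blast
  then show "X \<in> Symm"
    by (metis Jn_Symm S1m_Symm Symm_sub W2_Symm subspace_add subspace_scale)
qed

lemma Symm_un:
  assumes n4: "CARD('n::finite) \<ge> 4"
  and h: "a \<in> (Wn :: (real^'n^'n) set)" "b \<in> WS1" "c \<in> W2" "a + b + c = 0"
  shows "a = 0 \<and> b = 0 \<and> c = 0"
proof -
  obtain k u where ku: "a = k *\<^sub>R Jn" "b = S1m u" "sum u UNIV = 0" using h(1,2) unfolding Wn_def WS1_def by blast
  then have "k = 0 \<and> u = (\<lambda>i. 0) \<and> c = 0" using Symm_uniq[OF n4 ku(3) h(3)] h(4) by simp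
  then show ?thesis using ku S1m_zero by simp
qed

lemma iso_Symm:
  assumes n4: "CARD('n::finite) \<ge> 4"
  shows "isoDecomp (Symm :: (real^'n^'n) set) [[CARD('n)], [CARD('n) - 1, 1], [CARD('n) - 2, 2]]"
  by (rule isoDecomp3[OF Symm_sub specht_n[OF n4] specht_S1[OF n4] specht_W2[OF n4] Symm_eq[OF n4] Symm_un[OF n4]])

lemma iso_Anti:
  assumes n4: "CARD('n::finite) \<ge> 4"
  shows "isoDecomp (Anti :: (real^'n^'n) set) [[CARD('n) - 2, 1, 1]]"
  by (rule isoDecomp1[OF specht_anti[OF n4]])

lemma DS_split:
  assumes X: "X \<in> DS"
  shows "(1/2) *\<^sub>R (X + transpose X) \<in> Symm" "(1/2) *\<^sub>R (X - transpose X) \<in> Anti"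
    "X = (1/2) *\<^sub>R (X + transpose X) + (1/2) *\<^sub>R (X - transpose X)"
proof -
  have r: "(\<Sum>j\<in>UNIV. X $ i $ j) = 0" "(\<Sum>j\<in>UNIV. X $ j $ i) = 0" for i using X by (auto simp: DS_iff)
  have "(\<Sum>j\<in>UNIV. ((1/2) *\<^sub>R (X + transpose X)) $ i $ j) = 0" for i
  proof -
    have "(\<Sum>j\<in>UNIV. ((1/2) *\<^sub>R (X + transpose X)) $ i $ j) = ((\<Sum>j\<in>UNIV. X $ i $ j) + (\<Sum>j\<in>UNIV. X $ j $ i)) / 2"
      by (simp add: transpose_entry sum.distrib sum_divide_distrib[symmetric])
    then show ?thesis using r by simp
  qed
  moreover have "((1/2) *\<^sub>R (X + transpose X)) $ i $ j = ((1/2) *\<^sub>R (X + transpose X)) $ j $ i" for i j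
    by (simp add: transpose_entry)
  ultimately show "(1/2) *\<^sub>R (X + transpose X) \<in> Symm" unfolding Symm_iff by blast
  have "(\<Sum>j\<in>UNIV. ((1/2) *\<^sub>R (X - transpose X)) $ i $ j) = 0" for i
  proof -
    have "(\<Sum>j\<in>UNIV. ((1/2) *\<^sub>R (X - transpose X)) $ i $ j) = ((\<Sum>j\<in>UNIV. X $ i $ j) - (\<Sum>j\<in>UNIV. X $ j $ i)) / 2"
      by (simp add: transpose_entry sum_subtractf sum_divide_distrib[symmetric])
    then show ?thesis using r by simp
  qed
  moreover have "((1/2) *\<^sub>R (X - transpose X)) $ i $ j = - ((1/2) *\<^sub>R (X - transpose X)) $ j $ i" for i j
    by (simp add: transpose_entry field_simps)
  ultimately show "(1/2) *\<^sub>R (X - transpose X) \<in> Anti" unfolding Anti_iff by blast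
  show "X = (1/2) *\<^sub>R (X + transpose X) + (1/2) *\<^sub>R (X - transpose X)"
    by (simp add: vec_eq_iff field_simps)
qed

lemma iso_DS:
  assumes n4: "CARD('n::finite) \<ge> 4"
  shows "isoDecomp (DS :: (real^'n^'n) set) [[CARD('n)], [CARD('n) - 1, 1], [CARD('n) - 2, 2], [CARD('n) - 2, 1, 1]]"
proof (rule isoDecomp4[OF DS_sub specht_n[OF n4] specht_S1[OF n4] specht_W2[OF n4] specht_anti[OF n4]])
  show "X \<in> DS \<longleftrightarrow> (\<exists>a b c d. a \<in> Wn \<and> b \<in> WS1 \<and> c \<in> W2 \<and> d \<in> Anti \<and> X = a + b + c + d)" for X :: "real^'n^'n"
  proof
    assume X: "X \<in> DS"
    obtain a b c where abc: "a \<in> Wn" "b \<in> WS1" "c \<in> W2" "(1/2) *\<^sub>R (X + transpose X) = a + b + c"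
      using DS_split(1)[OF X] Symm_eq[OF n4] by blast
    then show "\<exists>a b c d. a \<in> Wn \<and> b \<in> WS1 \<and> c \<in> W2 \<and> d \<in> Anti \<and> X = a + b + c + d"
      using DS_split(2,3)[OF X] by metis
  next
    assume "\<exists>a b c d. a \<in> Wn \<and> b \<in> WS1 \<and> c \<in> W2 \<and> d \<in> Anti \<and> X = a + b + c + d"
    then obtain a b c d where abcd: "a \<in> Wn" "b \<in> WS1" "c \<in> W2" "d \<in> Anti" "X = a + b + c + d" by blast
    have "a + b + c \<in> Symm" using Symm_eq[OF n4] abcd by blast
    then show "X \<in> DS" using abcd(4,5) Symm_DS Anti_DS subspace_add[OF DS_sub] by metis
  qed
  show "a = 0 \<and> b = 0 \<and> c = 0 \<and> d = 0"
    if h: "a \<in> Wn" "b \<in> WS1" "c \<in> W2" "d \<in> Anti" "a + b + c + d = 0" for a b c d :: "real^'n^'n"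
  proof -
    have S: "a + b + c \<in> Symm" using Symm_eq[OF n4] h by blast
    have "d $ i $ j = 0" for i j
    proof -
      have e: "(a + b + c) $ i $ j + d $ i $ j = 0" "(a + b + c) $ j $ i + d $ j $ i = 0"
        using h(5) by (simp_all add: vec_eq_iff)
      have "(a + b + c) $ i $ j = (a + b + c) $ j $ i" by (rule SymmD(2)[OF S])
      moreover have "d $ i $ j = - d $ j $ i" by (rule AntiD(2)[OF h(4)])
      ultimately show ?thesis using e by linarith
    qed
    then have d0: "d = 0" by (simp add: vec_eq_iff)
    then have "a + b + c = 0" using h(5) by simp
    then show ?thesis using Symm_un[OF n4 h(1-3)] d0 by simp
  qed
qed

lemma setsum_sub: "subspace (setsum_sp (EI :: (real^'n::finite^'n) set) Symm)"
  unfolding setsum_sp_def by (rule subspace_sums[OF EI_sub Symm_sub])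

lemma iso_EISymm:
  assumes n4: "CARD('n::finite) \<ge> 4"
  shows "isoDecomp (setsum_sp (EI :: (real^'n^'n) set) Symm) [[CARD('n)], [CARD('n) - 1, 1], [CARD('n) - 1, 1], [CARD('n) - 2, 2]]"
proof (rule isoDecomp4[OF setsum_sub specht_n[OF n4] specht_E1[OF n4] specht_S1[OF n4] specht_W2[OF n4]])
  show "X \<in> setsum_sp EI Symm \<longleftrightarrow> (\<exists>a b c d. a \<in> Wn \<and> b \<in> WE1 \<and> c \<in> WS1 \<and> d \<in> W2 \<and> X = a + b + c + d)" for X :: "real^'n^'n"
  proof
    assume "X \<in> setsum_sp EI Symm"
    then obtain A B where AB: "A \<in> EI" "B \<in> Symm" "X = A + B" by (auto simp: setsum_sp_def)
    obtain c u where cu: "sum u UNIV = 0" "A = c *\<^sub>R Jn + E1 u" using AB(1) EI_char[OF n4] by blast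
    obtain k u' Z where ku: "sum u' UNIV = 0" "Z \<in> W2" "B = k *\<^sub>R Jn + S1m u' + Z" using Symm_char[OF n4 AB(2)] by blast
    have "X = (c + k) *\<^sub>R Jn + E1 u + S1m u' + Z" using AB(3) cu(2) ku(3) by (simp add: algebra_simps)
    moreover have "(c + k) *\<^sub>R Jn \<in> (Wn :: (real^'n^'n) set)" unfolding Wn_def by (rule rangeI)
    moreover have "E1 u \<in> WE1" using cu(1) by (auto simp: WE1_def)
    moreover have "S1m u' \<in> WS1" using ku(1) by (auto simp: WS1_def)
    ultimately show "\<exists>a b c d. a \<in> Wn \<and> b \<in> WE1 \<and> c \<in> WS1 \<and> d \<in> W2 \<and> X = a + b + c + d" using ku(2) by blast
  next
    assume "\<exists>a b c d. a \<in> Wn \<and> b \<in> WE1 \<and> c \<in> WS1 \<and> d \<in> W2 \<and> X = a + b + c + d"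
    then obtain a b c d where abcd: "a \<in> Wn" "b \<in> WE1" "c \<in> WS1" "d \<in> W2" "X = a + b + c + d" by blast
    have A: "a + b \<in> EI" using abcd(1,2) EI_char[OF n4] unfolding Wn_def WE1_def by blast
    have B: "c + d \<in> Symm"
    proof -
      have "(0::real^'n^'n) \<in> Wn" unfolding Wn_def by (rule image_eqI[of _ _ 0]) auto
      then show ?thesis using Symm_eq[OF n4] abcd(3,4) by (metis add_0)
    qed
    have "X = (a + b) + (c + d)" using abcd(5) by (simp add: algebra_simps)
    then show "X \<in> setsum_sp EI Symm" using A B unfolding setsum_sp_def by blast
  qed
  show "a = 0 \<and> b = 0 \<and> c = 0 \<and> d = 0"
    if h: "a \<in> Wn" "b \<in> WE1" "c \<in> WS1" "d \<in> W2" "a + b + c + d = 0" for a b c d :: "real^'n^'n"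
  proof -
    obtain u where u: "b = E1 u" "sum u UNIV = 0" using h(2) unfolding WE1_def by blast
    have S: "a + c + d \<in> Symm" using Symm_eq[OF n4] h(1,3,4) by blast
    have "u j = u i" for i j
    proof -
      have e: "(a + c + d) $ i $ j + b $ i $ j = 0" "(a + c + d) $ j $ i + b $ j $ i = 0"
        using h(5) by (simp_all add: vec_eq_iff algebra_simps)
      have "(a + c + d) $ i $ j = (a + c + d) $ j $ i" by (rule SymmD(2)[OF S])
      then show ?thesis using e u(1) by (simp add: E1_entry)
    qed
    note uc = this
    obtain x0 :: 'n where True by blast
    have "sum u UNIV = (\<Sum>j\<in>(UNIV::'n set). u x0)" using uc by (intro sum.cong) auto
    also have "\<dots> = real CARD('n) * u x0" by simp
    finally have "u x0 = 0" using u(2) by simp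
    then have u0: "u = (\<lambda>j. 0)"
    proof -
      assume ux: "u x0 = 0"
      show ?thesis
      proof
        fix j show "u j = 0" using uc[of x0 j] ux by simp
      qed
    qed
    then have b0: "b = 0" using u(1) E1_zero by simp
    then have "a + c + d = 0" using h(5) by (simp add: algebra_simps)
    then show ?thesis using Symm_un[OF n4 h(1) h(3) h(4)] b0 by simp
  qed
qed


lemma mm_rdistrib: "(A + B) ** C = A ** C + B ** (C :: real^'n::finite^'n)"
  by (simp add: vec_eq_iff mmult_entry distrib_right sum.distrib)

lemma EIm_mult: "EIm v ** EIm w = (- sum w UNIV) *\<^sub>R (EIm v :: real^'n::finite^'n)"
proof -
  let ?s = "sum v UNIV" and ?t = "sum w UNIV"
  have "(EIm v ** EIm w) $ i $ j = ((- ?t) *\<^sub>R EIm v) $ i $ j" for i j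
  proof -
    have "(EIm v ** EIm w) $ i $ j = (\<Sum>k\<in>UNIV. v k * w j - (if k = j then v k * ?t else 0)
          - (if k = i then ?s * w j else 0) + (if k = i then (if k = j then ?s * ?t else 0) else 0))"
      unfolding mmult_entry EIm_entry
      by (intro sum.cong refl) (auto simp: algebra_simps)
    also have "\<dots> = ?s * w j - v j * ?t - ?s * w j + (if i = j then ?s * ?t else 0)"
      by (simp add: sum.distrib sum_subtractf sum_distrib_right[symmetric])
    also have "\<dots> = ((- ?t) *\<^sub>R EIm v) $ i $ j" by (simp add: EIm_entry algebra_simps)
    finally show ?thesis .
  qed
  then show ?thesis by (simp add: vec_eq_iff)
qed

lemma alg_EI: "mat_algebra (EI :: (real^'n::finite^'n) set)"
  unfolding mat_algebra_def
proof (intro ballI)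
  fix A B :: "real^'n^'n" assume "A \<in> EI" "B \<in> EI"
  then obtain v w where "A = EIm v" "B = EIm w" by (auto simp: EI_eq)
  then have e: "A ** B = (- sum w UNIV) *\<^sub>R A" by (simp add: EIm_mult)
  show "A ** B \<in> EI" unfolding e by (rule subspace_scale[OF EI_sub \<open>A \<in> EI\<close>])
qed

lemma prod_rows: "(\<Sum>j\<in>UNIV. (A ** B) $ i $ j) = (\<Sum>k\<in>UNIV. A $ i $ k * (\<Sum>j\<in>UNIV. B $ k $ j))"
  unfolding mmult_entry by (subst sum.swap) (simp add: sum_distrib_left)

lemma prod_cols: "(\<Sum>i\<in>UNIV. (A ** B) $ i $ j) = (\<Sum>k\<in>UNIV. (\<Sum>i\<in>UNIV. A $ i $ k) * B $ k $ j)"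
  unfolding mmult_entry by (subst sum.swap) (simp add: sum_distrib_right)

lemma DS_mult: "A \<in> DS \<Longrightarrow> B \<in> DS \<Longrightarrow> A ** B \<in> DS"
  by (simp add: DS_iff prod_rows prod_cols)

lemma alg_DS: "mat_algebra (DS :: (real^'n::finite^'n) set)"
  unfolding mat_algebra_def using DS_mult by blast

lemma jordan_Symm: "jordan_alg (Symm :: (real^'n::finite^'n) set)"
  unfolding jordan_alg_def
proof (intro ballI)
  fix A B :: "real^'n^'n" assume a: "A \<in> Symm" "B \<in> Symm"
  have d: "A ** B + B ** A \<in> DS" using DS_mult Symm_DS a subspace_add[OF DS_sub] by metis
  have "(A ** B + B ** A) $ i $ j = (A ** B + B ** A) $ j $ i" for i j
  proof -
    have "(A ** B + B ** A) $ j $ i = (\<Sum>k\<in>UNIV. B $ i $ k * A $ k $ j) + (\<Sum>k\<in>UNIV. A $ i $ k * B $ k $ j)"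
      unfolding vector_add_component mmult_entry using SymmD(2)[OF a(1)] SymmD(2)[OF a(2)]
      by (simp add: mult.commute)
    then show ?thesis by (simp add: mmult_entry)
  qed
  then show "A ** B + B ** A \<in> Symm" using d by (simp add: Symm_def vec_eq_iff transpose_entry)
qed

lemma lie_Anti: "lie_alg (Anti :: (real^'n::finite^'n) set)"
  unfolding lie_alg_def
proof (intro ballI)
  fix A B :: "real^'n^'n" assume a: "A \<in> Anti" "B \<in> Anti"
  have d: "A ** B - B ** A \<in> DS" using DS_mult Anti_DS a subspace_diff[OF DS_sub] by metis
  have "(A ** B - B ** A) $ i $ j = - (A ** B - B ** A) $ j $ i" for i j
  proof -
    have "(A ** B - B ** A) $ j $ i = (\<Sum>k\<in>UNIV. B $ i $ k * A $ k $ j) - (\<Sum>k\<in>UNIV. A $ i $ k * B $ k $ j)"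
    proof -
      have "(A ** B - B ** A) $ j $ i = (\<Sum>k\<in>UNIV. A $ j $ k * B $ k $ i) - (\<Sum>k\<in>UNIV. B $ j $ k * A $ k $ i)"
        by (simp add: mmult_entry)
      also have "(\<Sum>k\<in>UNIV. A $ j $ k * B $ k $ i) = (\<Sum>k\<in>UNIV. B $ i $ k * A $ k $ j)"
        by (rule sum.cong[OF refl]) (simp add: AntiD(2)[OF a(1), of j] AntiD(2)[OF a(2), of k i for k])
      also have "(\<Sum>k\<in>UNIV. B $ j $ k * A $ k $ i) = (\<Sum>k\<in>UNIV. A $ i $ k * B $ k $ j)"
        by (rule sum.cong[OF refl]) (simp add: AntiD(2)[OF a(2), of j] AntiD(2)[OF a(1), of k i for k])
      finally show ?thesis .
    qed
    then show ?thesis by (simp add: mmult_entry)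
  qed
  then show "A ** B - B ** A \<in> Anti" using d by (simp add: Anti_def vec_eq_iff transpose_entry)
qed


lemma setsum_char:
  assumes n4: "CARD('n::finite) \<ge> 4"
  shows "(X :: real^'n^'n) \<in> setsum_sp EI Symm \<longleftrightarrow> (\<exists>u S. sum u UNIV = 0 \<and> S \<in> Symm \<and> X = E1 u + S)"
proof
  assume "X \<in> setsum_sp EI Symm"
  then obtain A B where AB: "A \<in> EI" "B \<in> Symm" "X = A + B" by (auto simp: setsum_sp_def)
  obtain c u where cu: "sum u UNIV = 0" "A = c *\<^sub>R Jn + E1 u" using AB(1) EI_char[OF n4] by blast
  have "c *\<^sub>R Jn + B \<in> Symm" using AB(2) Jn_Symm Symm_sub by (metis subspace_add subspace_scale)
  moreover have "X = E1 u + (c *\<^sub>R Jn + B)" using AB(3) cu(2) by (simp add: algebra_simps)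
  ultimately show "\<exists>u S. sum u UNIV = 0 \<and> S \<in> Symm \<and> X = E1 u + S" using cu(1) by blast
next
  assume "\<exists>u S. sum u UNIV = 0 \<and> S \<in> Symm \<and> X = E1 u + S"
  then obtain u S where uS: "sum u UNIV = 0" "S \<in> Symm" "X = E1 u + S" by blast
  have "E1 u \<in> EI" using EI_char[OF n4] uS(1) by (metis add_0 scale_zero_left)
  then show "X \<in> setsum_sp EI Symm" using uS unfolding setsum_sp_def by blast
qed

lemma Symm_setsum:
  assumes n4: "CARD('n::finite) \<ge> 4"
  shows "(S :: real^'n^'n) \<in> Symm \<Longrightarrow> S \<in> setsum_sp EI Symm"
  using setsum_char[OF n4, of S] E1_zero by (metis add_0 sum.neutral_const)

definition Tv :: "real^'n::finite^'n \<Rightarrow> ('n \<Rightarrow> real) \<Rightarrow> 'n \<Rightarrow> real" where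
  "Tv T u = (\<lambda>j. \<Sum>k\<in>UNIV. u k * T $ k $ j)"

lemma E1E1: "sum u UNIV = 0 \<Longrightarrow> E1 u ** E1 w = (0::real^'n::finite^'n)"
  by (simp add: vec_eq_iff mmult_entry E1_entry sum_distrib_right[symmetric])

lemma E1T: "E1 u ** T = E1 (Tv T u)"
  by (simp add: vec_eq_iff mmult_entry E1_entry Tv_def)

lemma Tv_E1: "sum u UNIV = 0 \<Longrightarrow> Tv (E1 w) u = (\<lambda>j. 0)"
  by (simp add: Tv_def E1_entry sum_distrib_right[symmetric])

lemma SE1: "S \<in> Symm \<Longrightarrow> S ** E1 w = (0::real^'n::finite^'n)"
  by (simp add: vec_eq_iff mmult_entry E1_entry sum_distrib_right[symmetric] SymmD(1))

lemma Tv_sum: "T \<in> Symm \<Longrightarrow> sum (Tv T u) UNIV = 0"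
  unfolding Tv_def by (subst sum.swap) (simp add: sum_distrib_left[symmetric] SymmD(1))

lemma jordan_EISymm:
  assumes n4: "CARD('n::finite) \<ge> 4"
  shows "jordan_alg (setsum_sp (EI :: (real^'n^'n) set) Symm)"
  unfolding jordan_alg_def
proof (intro ballI)
  fix X Y :: "real^'n^'n" assume "X \<in> setsum_sp EI Symm" "Y \<in> setsum_sp EI Symm"
  then obtain u S w T where h: "sum u UNIV = 0" "S \<in> Symm" "X = E1 u + S"
    "sum w UNIV = 0" "T \<in> Symm" "Y = E1 w + T" using setsum_char[OF n4] by metis
  have "X ** Y + Y ** X = E1 (\<lambda>j. Tv T u j + Tv S w j) + (S ** T + T ** S)"
  proof -
    have "X ** Y = E1 (Tv T u) + S ** T"
      using h by (simp add: matrix_add_ldistrib mm_rdistrib E1T SE1 Tv_E1 E1_zero)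
    moreover have "Y ** X = E1 (Tv S w) + T ** S"
      using h by (simp add: matrix_add_ldistrib mm_rdistrib E1T SE1 Tv_E1 E1_zero)
    moreover have "E1 (\<lambda>j. Tv T u j + Tv S w j) = E1 (Tv T u) + E1 (Tv S w)" by (simp add: E1_def vec_eq_iff)
    ultimately show ?thesis by (simp add: algebra_simps)
  qed
  moreover have "sum (\<lambda>j. Tv T u j + Tv S w j) UNIV = 0" using Tv_sum[OF h(5), of u] Tv_sum[OF h(2), of w] by (simp add: sum.distrib)
  moreover have "S ** T + T ** S \<in> Symm" using jordan_Symm h(2,5) unfolding jordan_alg_def by blast
  ultimately show "X ** Y + Y ** X \<in> setsum_sp EI Symm" using setsum_char[OF n4] by blast
qed

definition ev :: "'n \<Rightarrow> 'n \<Rightarrow> 'n \<Rightarrow> real" where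
  "ev p q i = (if i = p then 1 else 0) - (if i = q then 1 else 0)"

definition Lm :: "'n::finite \<Rightarrow> 'n \<Rightarrow> real^'n^'n" where
  "Lm p q = (\<chi> i j. ev p q i * ev p q j)"

lemma Lm_Symm: "p \<noteq> q \<Longrightarrow> Lm p q \<in> Symm"
proof -
  assume pq: "p \<noteq> q"
  have "(\<Sum>j\<in>UNIV. Lm p q $ i $ j) = 0" for i
    using pq by (simp add: Lm_def sum_distrib_left[symmetric] ev_def sum_subtractf)
  moreover have "Lm p q $ i $ j = Lm p q $ j $ i" for i j by (simp add: Lm_def)
  ultimately show ?thesis unfolding Symm_iff by blast
qed

lemma rank1_mult: "(\<chi> i j. a i * b j) ** (\<chi> i j. c i * d j) = (\<chi> i j. a i * (\<Sum>k\<in>UNIV. b k * c k) * d j :: real^'n::finite^'n)"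
  by (simp add: vec_eq_iff mmult_entry sum_distrib_left sum_distrib_right algebra_simps)

lemma ev_dot:
  assumes "p \<noteq> q" "q \<noteq> r" "p \<noteq> r"
  shows "(\<Sum>k\<in>(UNIV::'n::finite set). ev p q k * ev q r k) = -1"
proof -
  have "(\<Sum>k\<in>(UNIV::'n set). ev p q k * ev q r k) = (\<Sum>k\<in>UNIV. if k = q then -1 else 0)"
    using assms by (intro sum.cong refl) (auto simp: ev_def)
  then show ?thesis by simp
qed

definition cyc :: "real^'n::finite^'n \<Rightarrow> 'n \<Rightarrow> 'n \<Rightarrow> 'n \<Rightarrow> real" where
  "cyc M p q r = (M $ p $ q - M $ q $ p) + (M $ q $ r - M $ r $ q) + (M $ r $ p - M $ p $ r)"

lemma cyc_setsum:
  assumes n4: "CARD('n::finite) \<ge> 4" and M: "(M :: real^'n^'n) \<in> setsum_sp EI Symm"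
  shows "cyc M p q r = 0"
proof -
  obtain u S where h: "sum u UNIV = 0" "S \<in> Symm" "M = E1 u + S" using setsum_char[OF n4] M by blast
  show ?thesis unfolding cyc_def h(3) using SymmD(2)[OF h(2)] by (simp add: E1_entry)
qed

lemma not_lie:
  assumes n4: "CARD('n::finite) \<ge> 4"
  shows "\<not> lie_alg (setsum_sp (EI :: (real^'n^'n) set) Symm) \<and> \<not> lie_alg (Symm :: (real^'n^'n) set)"
proof -
  obtain p q r s :: 'n where d: "p \<noteq> q" "p \<noteq> r" "p \<noteq> s" "q \<noteq> r" "q \<noteq> s" "r \<noteq> s"
    using exists4[OF n4] by blast
  let ?A = "Lm p q" and ?B = "Lm q r"
  have A: "?A \<in> Symm" "?B \<in> Symm" using Lm_Symm d by auto
  let ?C = "?A ** ?B - ?B ** ?A"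
  have dot2: "(\<Sum>k\<in>(UNIV::'n set). ev q r k * ev p q k) = -1"
    using ev_dot[of p q r] d by (simp add: mult.commute)
  have C: "?C $ i $ j = - (ev p q i * ev q r j) + ev q r i * ev p q j" for i j
    unfolding Lm_def rank1_mult using ev_dot[of p q r] dot2 d by simp
  have "cyc ?C p q r = -6" unfolding cyc_def C using d by (simp add: ev_def)
  then have nC: "?C \<notin> setsum_sp EI Symm" using cyc_setsum[OF n4] by fastforce
  then have "?C \<notin> Symm" using Symm_setsum[OF n4] by blast
  moreover have "?A \<in> setsum_sp EI Symm" "?B \<in> setsum_sp EI Symm" using A Symm_setsum[OF n4] by blast+
  ultimately show ?thesis using nC A unfolding lie_alg_def by blast
qed

lemma not_jordan_Anti:
  assumes n4: "CARD('n::finite) \<ge> 4"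
  shows "\<not> jordan_alg (Anti :: (real^'n^'n) set)"
proof -
  obtain p q r s :: 'n where d: "p \<noteq> q" "p \<noteq> r" "p \<noteq> s" "q \<noteq> r" "q \<noteq> s" "r \<noteq> s"
    using exists4[OF n4] by blast
  let ?A = "Tri r p q :: real^'n^'n"
  have A: "?A \<in> Anti" by (rule Tri_Anti)
  have "(?A ** ?A) $ p $ p = (\<Sum>k\<in>UNIV. (if k = q then -1 else 0) + (if k = r then -1 else 0))"
    unfolding mmult_entry using d by (intro sum.cong refl) (auto simp: Tri_entry Am_entry)
  also have "\<dots> = -2" by (simp add: sum.distrib)
  finally have "(?A ** ?A + ?A ** ?A) $ p $ p = -4" by simp
  moreover have "X $ p $ p = 0" if "X \<in> Anti" for X :: "real^'n^'n" using AntiD(2)[OF that, of p p] by simp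
  ultimately have "?A ** ?A + ?A ** ?A \<notin> Anti" by fastforce
  then show ?thesis using A unfolding jordan_alg_def by blast
qed


theorem mainTheorem11:
  assumes "CARD('n::finite) \<ge> 4"
  shows "let n = CARD('n) in
     (isoDecomp (EI :: (real^'n^'n) set) [[n], [n - 1, 1]] \<and> mat_algebra (EI :: (real^'n^'n) set))
   \<and> (isoDecomp (DS :: (real^'n^'n) set) [[n], [n - 1, 1], [n - 2, 2], [n - 2, 1, 1]]
        \<and> mat_algebra (DS :: (real^'n^'n) set))
   \<and> (isoDecomp (Symm :: (real^'n^'n) set) [[n], [n - 1, 1], [n - 2, 2]]
        \<and> jordan_alg (Symm :: (real^'n^'n) set) \<and> \<not> lie_alg (Symm :: (real^'n^'n) set))
   \<and> (isoDecomp (Anti :: (real^'n^'n) set) [[n - 2, 1, 1]]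
        \<and> lie_alg (Anti :: (real^'n^'n) set) \<and> \<not> jordan_alg (Anti :: (real^'n^'n) set))
   \<and> (isoDecomp (setsum_sp (EI :: (real^'n^'n) set) Symm) [[n], [n - 1, 1], [n - 1, 1], [n - 2, 2]]
        \<and> jordan_alg (setsum_sp (EI :: (real^'n^'n) set) Symm)
        \<and> \<not> lie_alg (setsum_sp (EI :: (real^'n^'n) set) Symm))"
  unfolding Let_def
  using iso_EI[OF assms] alg_EI iso_DS[OF assms] alg_DS iso_Symm[OF assms] jordan_Symm
    iso_Anti[OF assms] lie_Anti not_jordan_Anti[OF assms] iso_EISymm[OF assms] jordan_EISymm[OF assms]
    not_lie[OF assms]
  by blast


end
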